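(* The following unital $*$-algebras admit faithful C*-representations: (i) $\mathbb{C}BC$; (ii) $\mathbb{C}S_\infty$.
   Context: For a monoid $S$ with an involution $s\mapsto s^*$ (a map with $(st)^*=t^*s^*$, $s^{**}=s$), the semigroup algebra $\mathbb{C}S$ (with basis $\{\delta_s: s\in S\}$ and product $\delta_s\delta_t=\delta_{st}$) is a unital $*$-algebra with involution $\delta_s^*=\delta_{s^*}$ extended conjugate-linearly. $BC$ is the bicyclic monoid $\langle p,q : pq=e\rangle$ with involution determined by $p^*=q$. $S_\infty$ is the free monoid on the countably infinite set $\{t_n, t_n^*: n\in\mathbb{N}\}$, with involution determined by $t_n\mapsto t_n^*$ (and $t_n^*\mapsto t_n$). A $*$-algebra admits a faithful C*-representation if there is an injective $*$-homomorphism from it into some C*-algebra. *)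

theory Defs
  imports Complex_Main
begin

record 'b cstar =
  cs_carrier :: "'b set"
  cs_zero    :: 'b
  cs_add     :: "'b \<Rightarrow> 'b \<Rightarrow> 'b"
  cs_smult   :: "complex \<Rightarrow> 'b \<Rightarrow> 'b"
  cs_mult    :: "'b \<Rightarrow> 'b \<Rightarrow> 'b"
  cs_star    :: "'b \<Rightarrow> 'b"
  cs_norm    :: "'b \<Rightarrow> real"

definition cs_dist :: "('b, 'c) cstar_scheme \<Rightarrow> 'b \<Rightarrow> 'b \<Rightarrow> real" where
  "cs_dist A x y = cs_norm A (cs_add A x (cs_smult A (-1) y))"

definition cstar_algebra :: "('b, 'c) cstar_scheme \<Rightarrow> bool" where
  "cstar_algebra A \<longleftrightarrow>
     (let C = cs_carrier A; z = cs_zero A; add = cs_add A; sm = cs_smult A;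
          mul = cs_mult A; st = cs_star A; nm = cs_norm A in
     \<comment> \<open>closure\<close>
     z \<in> C \<and>
     (\<forall>x\<in>C. \<forall>y\<in>C. add x y \<in> C \<and> mul x y \<in> C) \<and>
     (\<forall>c. \<forall>x\<in>C. sm c x \<in> C) \<and>
     (\<forall>x\<in>C. st x \<in> C) \<and>
     \<comment> \<open>complex vector space\<close>
     (\<forall>x\<in>C. \<forall>y\<in>C. \<forall>w\<in>C. add (add x y) w = add x (add y w)) \<and>
     (\<forall>x\<in>C. \<forall>y\<in>C. add x y = add y x) \<and>
     (\<forall>x\<in>C. add z x = x) \<and>
     (\<forall>x\<in>C. \<exists>y\<in>C. add x y = z) \<and>
     (\<forall>c. \<forall>x\<in>C. \<forall>y\<in>C. sm c (add x y) = add (sm c x) (sm c y)) \<and>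
     (\<forall>c d. \<forall>x\<in>C. sm (c + d) x = add (sm c x) (sm d x)) \<and>
     (\<forall>c d. \<forall>x\<in>C. sm c (sm d x) = sm (c * d) x) \<and>
     (\<forall>x\<in>C. sm 1 x = x) \<and>
     \<comment> \<open>associative algebra\<close>
     (\<forall>x\<in>C. \<forall>y\<in>C. \<forall>w\<in>C. mul (mul x y) w = mul x (mul y w)) \<and>
     (\<forall>x\<in>C. \<forall>y\<in>C. \<forall>w\<in>C. mul x (add y w) = add (mul x y) (mul x w)) \<and>
     (\<forall>x\<in>C. \<forall>y\<in>C. \<forall>w\<in>C. mul (add x y) w = add (mul x w) (mul y w)) \<and>
     (\<forall>c. \<forall>x\<in>C. \<forall>y\<in>C. mul (sm c x) y = sm c (mul x y) \<and> mul x (sm c y) = sm c (mul x y)) \<and>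
     \<comment> \<open>involution\<close>
     (\<forall>x\<in>C. st (st x) = x) \<and>
     (\<forall>x\<in>C. \<forall>y\<in>C. st (add x y) = add (st x) (st y)) \<and>
     (\<forall>c. \<forall>x\<in>C. st (sm c x) = sm (cnj c) (st x)) \<and>
     (\<forall>x\<in>C. \<forall>y\<in>C. st (mul x y) = mul (st y) (st x)) \<and>
     \<comment> \<open>norm, submultiplicativity, C*-identity\<close>
     (\<forall>x\<in>C. nm x = 0 \<longleftrightarrow> x = z) \<and>
     (\<forall>c. \<forall>x\<in>C. nm (sm c x) = cmod c * nm x) \<and>
     (\<forall>x\<in>C. \<forall>y\<in>C. nm (add x y) \<le> nm x + nm y) \<and>
     (\<forall>x\<in>C. \<forall>y\<in>C. nm (mul x y) \<le> nm x * nm y) \<and>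
     (\<forall>x\<in>C. nm (mul (st x) x) = (nm x)\<^sup>2) \<and>
     \<comment> \<open>completeness\<close>
     (\<forall>X. (\<forall>n. X n \<in> C) \<and>
          (\<forall>e>0. \<exists>N. \<forall>m\<ge>N. \<forall>n\<ge>N. cs_dist A (X m) (X n) < e) \<longrightarrow>
          (\<exists>L\<in>C. (\<lambda>n. cs_dist A (X n) L) \<longlonglongrightarrow> 0)))"

text \<open>Elements of \<open>\<complex>S\<close> are finitely supported functions \<open>S \<Rightarrow> \<complex>\<close>;
  \<open>\<delta>\<^sub>s\<close> is the indicator of \<open>s\<close>.\<close>
definition salg_carrier :: "('a \<Rightarrow> complex) set" where
  "salg_carrier = {f. finite {s. f s \<noteq> 0}}"

definition salg_mult :: "('a \<Rightarrow> 'a \<Rightarrow> 'a) \<Rightarrow> ('a \<Rightarrow> complex) \<Rightarrow> ('a \<Rightarrow> complex) \<Rightarrow> 'a \<Rightarrow> complex" where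
  "salg_mult mul f g u =
     (\<Sum>(s, t) \<in> {(s, t). mul s t = u \<and> f s \<noteq> 0 \<and> g t \<noteq> 0}. f s * g t)"

definition salg_star :: "('a \<Rightarrow> 'a) \<Rightarrow> ('a \<Rightarrow> complex) \<Rightarrow> 'a \<Rightarrow> complex" where
  "salg_star invl f = (\<lambda>s. cnj (f (invl s)))"

type_synonym cs_elem = "(nat \<Rightarrow> complex) \<Rightarrow> (nat \<Rightarrow> complex)"

definition star_hom_into :: "('a \<Rightarrow> 'a \<Rightarrow> 'a) \<Rightarrow> ('a \<Rightarrow> 'a) \<Rightarrow> ('b, 'c) cstar_scheme
    \<Rightarrow> (('a \<Rightarrow> complex) \<Rightarrow> 'b) \<Rightarrow> bool" where
  "star_hom_into mul invl A \<pi> \<longleftrightarrow>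
     (\<forall>f\<in>salg_carrier. \<pi> f \<in> cs_carrier A) \<and>
     (\<forall>f\<in>salg_carrier. \<forall>g\<in>salg_carrier. \<pi> (\<lambda>s. f s + g s) = cs_add A (\<pi> f) (\<pi> g)) \<and>
     (\<forall>c. \<forall>f\<in>salg_carrier. \<pi> (\<lambda>s. c * f s) = cs_smult A c (\<pi> f)) \<and>
     (\<forall>f\<in>salg_carrier. \<forall>g\<in>salg_carrier. \<pi> (salg_mult mul f g) = cs_mult A (\<pi> f) (\<pi> g)) \<and>
     (\<forall>f\<in>salg_carrier. \<pi> (salg_star invl f) = cs_star A (\<pi> f))"

definition has_faithful_cstar_rep :: "('a \<Rightarrow> 'a \<Rightarrow> 'a) \<Rightarrow> ('a \<Rightarrow> 'a) \<Rightarrow> bool" where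
  "has_faithful_cstar_rep mul invl \<longleftrightarrow>
     (\<exists>(A :: cs_elem cstar) \<pi>. cstar_algebra A \<and> star_hom_into mul invl A \<pi> \<and>
        inj_on \<pi> salg_carrier)"

text \<open>Normal form: \<open>(m, n)\<close> stands for \<open>q\<^sup>m p\<^sup>n\<close> in \<open>\<langle>p, q | pq = e\<rangle>\<close>; \<open>e = (0,0)\<close>,
  \<open>p = (0,1)\<close>, \<open>q = (1,0)\<close>.  Using \<open>p\<^sup>b q\<^sup>c = q\<^sup>(c - min b c) p\<^sup>(b - min b c)\<close>.\<close>
definition bc_mult :: "nat \<times> nat \<Rightarrow> nat \<times> nat \<Rightarrow> nat \<times> nat" where
  "bc_mult x y = (case x of (a, b) \<Rightarrow> case y of (c, d) \<Rightarrow>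
      (a + c - min b c, b + d - min b c))"

text \<open>\<open>(q\<^sup>m p\<^sup>n)\<^sup>* = q\<^sup>n p\<^sup>m\<close>, determined by \<open>p\<^sup>* = q\<close>.\<close>
definition bc_star :: "nat \<times> nat \<Rightarrow> nat \<times> nat" where
  "bc_star x = (case x of (m, n) \<Rightarrow> (n, m))"

text \<open>Words over the letters \<open>t\<^sub>n = (n, False)\<close>, \<open>t\<^sub>n\<^sup>* = (n, True)\<close>; product is
  concatenation, involution reverses the word and stars each letter.\<close>
definition sinf_mult :: "(nat \<times> bool) list \<Rightarrow> (nat \<times> bool) list \<Rightarrow> (nat \<times> bool) list" where
  "sinf_mult u v = u @ v"

definition sinf_star :: "(nat \<times> bool) list \<Rightarrow> (nat \<times> bool) list" where
  "sinf_star u = rev (map (\<lambda>(n, b). (n, \<not> b)) u)"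

end

theory Submission
  imports Defs "HOL-Analysis.Analysis"
begin


typedef ell2 = "{x :: nat \<Rightarrow> complex. summable (\<lambda>i. (norm (x i))^2)}"
  morphisms Rep_ell2 Abs_ell2
  by (intro exI[of _ "\<lambda>_. 0"]) simp

lemma ell2_summable: "summable (\<lambda>i. (norm (Rep_ell2 x i))^2)"
  using Rep_ell2[of x] by simp

lemma sq_add_le: "(norm ((a::complex) + b))^2 \<le> 2 * (norm a)^2 + 2 * (norm b)^2"
proof -
  have "norm (a+b) \<le> norm a + norm b" by (rule norm_triangle_ineq)
  hence "(norm (a+b))^2 \<le> (norm a + norm b)^2" by (simp add: power_mono)
  also have "\<dots> \<le> 2 * (norm a)^2 + 2 * (norm b)^2"
  proof -
    have "0 \<le> (norm a - norm b) * (norm a - norm b)" by simp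
    thus ?thesis unfolding power2_eq_square by (simp add: algebra_simps)
  qed
  finally show ?thesis .
qed

lemma summable_sq_add:
  assumes "summable (\<lambda>i. (norm ((x::nat\<Rightarrow>complex) i))^2)" "summable (\<lambda>i. (norm (y i))^2)"
  shows "summable (\<lambda>i. (norm (x i + y i))^2)"
proof (rule summable_comparison_test'[where N=0])
  show "summable (\<lambda>i. 2 * (norm (x i))^2 + 2 * (norm (y i))^2)"
    using assms by (intro summable_add summable_mult) auto
  fix n show "norm ((norm (x n + y n))^2) \<le> 2 * (norm (x n))^2 + 2 * (norm (y n))^2"
    using sq_add_le by simp
qed

lemma summable_sq_scale:
  assumes "summable (\<lambda>i. (norm ((x::nat\<Rightarrow>complex) i))^2)"
  shows "summable (\<lambda>i. (norm (c * x i))^2)"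
  using summable_mult[OF assms, of "(norm c)^2"] by (simp add: norm_mult power_mult_distrib)

lemma inner_le_sq: "\<bar>inner (a::complex) b\<bar> \<le> (norm a)^2 + (norm b)^2"
proof -
  have "\<bar>inner a b\<bar> \<le> norm a * norm b" by (rule Cauchy_Schwarz_ineq2)
  also have "\<dots> \<le> (norm a)^2 + (norm b)^2"
  proof -
    have "0 \<le> (norm a - norm b) * (norm a - norm b)" by simp
    hence "norm a * norm b * 2 \<le> norm a * norm a + norm b * norm b" by (simp add: algebra_simps)
    moreover have "0 \<le> norm a * norm b" by simp
    ultimately show ?thesis unfolding power2_eq_square by linarith
  qed
  finally show ?thesis .
qed

lemma summable_inner:
  "summable (\<lambda>i. inner (Rep_ell2 x i) (Rep_ell2 y i))"
proof (rule summable_comparison_test'[where N=0])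
  show "summable (\<lambda>i. (norm (Rep_ell2 x i))^2 + (norm (Rep_ell2 y i))^2)"
    using ell2_summable by (intro summable_add) auto
  fix n show "norm (inner (Rep_ell2 x n) (Rep_ell2 y n)) \<le> (norm (Rep_ell2 x n))^2 + (norm (Rep_ell2 y n))^2"
    using inner_le_sq by simp
qed

lemma Rep_Abs_add: "Rep_ell2 (Abs_ell2 (\<lambda>i. Rep_ell2 x i + Rep_ell2 y i)) = (\<lambda>i. Rep_ell2 x i + Rep_ell2 y i)"
  by (rule Abs_ell2_inverse) (simp add: summable_sq_add ell2_summable)

lemma Rep_Abs_scale: "Rep_ell2 (Abs_ell2 (\<lambda>i. c * Rep_ell2 x i)) = (\<lambda>i. c * Rep_ell2 x i)"
  by (rule Abs_ell2_inverse) (simp add: summable_sq_scale ell2_summable)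

lemma Rep_Abs_zero: "Rep_ell2 (Abs_ell2 (\<lambda>i. 0)) = (\<lambda>i. 0)"
  by (rule Abs_ell2_inverse) simp

instantiation ell2 :: real_inner
begin

definition "0 = Abs_ell2 (\<lambda>i. 0)"
definition "x + y = Abs_ell2 (\<lambda>i. Rep_ell2 x i + Rep_ell2 y i)"
definition "- x = Abs_ell2 (\<lambda>i. (-1) * Rep_ell2 x i)"
definition "x - y = Abs_ell2 (\<lambda>i. Rep_ell2 x i + Rep_ell2 (- y) i)"
definition "scaleR r x = Abs_ell2 (\<lambda>i. complex_of_real r * Rep_ell2 x i)"
definition "inner x y = (\<Sum>i. inner (Rep_ell2 x i) (Rep_ell2 y i))"
definition "norm (x::ell2) = sqrt (inner x x)"
definition "sgn (x::ell2) = scaleR (inverse (norm x)) x"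
definition "dist (x::ell2) y = norm (x - y)"
definition "(uniformity :: (ell2 \<times> ell2) filter) = (INF e\<in>{0 <..}. principal {(x, y). dist x y < e})"
definition "open (U :: ell2 set) = (\<forall>x\<in>U. \<forall>\<^sub>F (x', y) in uniformity. x' = x \<longrightarrow> y \<in> U)"

lemma Rep_zero[simp]: "Rep_ell2 0 = (\<lambda>i. 0)"
  by (simp add: zero_ell2_def Rep_Abs_zero)
lemma Rep_plus[simp]: "Rep_ell2 (x + y) = (\<lambda>i. Rep_ell2 x i + Rep_ell2 y i)"
  by (simp add: plus_ell2_def Rep_Abs_add)
lemma Rep_uminus[simp]: "Rep_ell2 (- x) = (\<lambda>i. - Rep_ell2 x i)"
  using Rep_Abs_scale[of "-1" x] by (simp add: uminus_ell2_def)
lemma Rep_minus[simp]: "Rep_ell2 (x - y) = (\<lambda>i. Rep_ell2 x i - Rep_ell2 y i)"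
  using Rep_Abs_add[of x "- y"] by (simp add: minus_ell2_def)
lemma Rep_scaleR[simp]: "Rep_ell2 (scaleR r x) = (\<lambda>i. complex_of_real r * Rep_ell2 x i)"
  by (simp add: scaleR_ell2_def Rep_Abs_scale)

lemma ell2_eqI: "(\<And>i. Rep_ell2 x i = Rep_ell2 y i) \<Longrightarrow> x = y"
  by (metis Rep_ell2_inject ext)

instance
proof
  fix x y z :: ell2 and a b :: real
  show "x + y + z = x + (y + z)" by (rule ell2_eqI) (simp add: algebra_simps)
  show "x + y = y + x" by (rule ell2_eqI) (simp add: algebra_simps)
  show "0 + x = x" by (rule ell2_eqI) simp
  show "- x + x = 0" by (rule ell2_eqI) simp
  show "x - y = x + - y" by (rule ell2_eqI) simp
  show "a *\<^sub>R (x + y) = a *\<^sub>R x + a *\<^sub>R y" by (rule ell2_eqI) (simp add: algebra_simps)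
  show "(a + b) *\<^sub>R x = a *\<^sub>R x + b *\<^sub>R x" by (rule ell2_eqI) (simp add: algebra_simps)
  show "a *\<^sub>R b *\<^sub>R x = (a * b) *\<^sub>R x" by (rule ell2_eqI) (simp add: algebra_simps)
  show "1 *\<^sub>R x = x" by (rule ell2_eqI) simp
  show "sgn x = inverse (norm x) *\<^sub>R x" by (simp add: sgn_ell2_def)
  show "dist x y = norm (x - y)" by (simp add: dist_ell2_def)
  show "(uniformity :: (ell2 \<times> ell2) filter) = (INF e\<in>{0 <..}. principal {(x, y). dist x y < e})"
    by (simp add: uniformity_ell2_def)
  fix U :: "ell2 set"
  show "open U = (\<forall>x\<in>U. \<forall>\<^sub>F (x', y) in uniformity. x' = x \<longrightarrow> y \<in> U)"
    by (simp add: open_ell2_def)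
  show "inner x y = inner y x" by (simp add: inner_ell2_def inner_commute)
  show "inner (x + y) z = inner x z + inner y z"
    using suminf_add[OF summable_inner[of x z] summable_inner[of y z]]
    by (simp add: inner_ell2_def inner_add_left)
  have sc: "\<And>z w. inner (complex_of_real a * z) w = a * inner z w"
    by (simp add: inner_complex_def algebra_simps)
  show "inner (a *\<^sub>R x) y = a * inner x y"
    using suminf_mult[OF summable_inner[of x y], of a]
    by (simp only: inner_ell2_def Rep_scaleR sc)
  have nn: "\<And>i. 0 \<le> inner (Rep_ell2 x i) (Rep_ell2 x i)" by simp
  show "0 \<le> inner x x" unfolding inner_ell2_def
    by (rule suminf_nonneg[OF summable_inner nn])
  show "(inner x x = 0) = (x = 0)"
  proof
    assume "inner x x = 0"
    hence "(\<lambda>i. inner (Rep_ell2 x i) (Rep_ell2 x i)) = (\<lambda>i. 0)"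
      using suminf_eq_zero_iff[OF summable_inner nn] by (simp add: inner_ell2_def)
    hence "\<And>i. Rep_ell2 x i = 0" by (metis inner_eq_zero_iff)
    thus "x = 0" by (intro ell2_eqI) simp
  next
    assume "x = 0" thus "inner x x = 0" by (simp add: inner_ell2_def)
  qed
  show "norm x = sqrt (inner x x)" by (simp add: norm_ell2_def)
qed
end

lemma norm_ell2_sq: "(norm (x::ell2))^2 = (\<Sum>i. (norm (Rep_ell2 x i))^2)"
proof -
  have "(norm x)^2 = inner x x" by (rule power2_norm_eq_inner)
  also have "\<dots> = (\<Sum>i. (norm (Rep_ell2 x i))^2)"
    unfolding inner_ell2_def by (simp only: power2_norm_eq_inner)
  finally show ?thesis .
qed

lemma sum_sq_le_norm: "(\<Sum>i<K. (norm (Rep_ell2 x i))^2) \<le> (norm x)^2"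
  unfolding norm_ell2_sq by (rule sum_le_suminf[OF ell2_summable]) auto

lemma comp_le_norm: "norm (Rep_ell2 x i) \<le> norm x"
proof -
  have "(\<Sum>j<Suc i. (norm (Rep_ell2 x j))^2) \<le> (norm x)^2" by (rule sum_sq_le_norm)
  moreover have "(norm (Rep_ell2 x i))^2 \<le> (\<Sum>j<Suc i. (norm (Rep_ell2 x j))^2)"
    by (rule member_le_sum) auto
  ultimately show ?thesis by (meson norm_ge_zero order_trans power2_le_imp_le)
qed


lemma Rep_sum: "Rep_ell2 (sum f A) = (\<lambda>i. \<Sum>a\<in>A. Rep_ell2 (f a) i)"
  by (induction A rule: infinite_finite_induct) auto

instance ell2 :: complete_space
proof
  fix X :: "nat \<Rightarrow> ell2" assume C: "Cauchy X"
  hence cI: "\<forall>e>0. \<exists>N. \<forall>m\<ge>N. \<forall>n\<ge>N. norm (X m - X n) < e" by (simp add: Cauchy_iff)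
  have "\<forall>i. \<exists>l. (\<lambda>n. Rep_ell2 (X n) i) \<longlonglongrightarrow> l"
  proof
    fix i
    have "Cauchy (\<lambda>n. Rep_ell2 (X n) i)"
      unfolding Cauchy_iff
    proof (intro allI impI)
      fix e :: real assume "e > 0"
      then obtain N where N: "\<forall>m\<ge>N. \<forall>n\<ge>N. norm (X m - X n) < e" using cI by blast
      show "\<exists>M. \<forall>m\<ge>M. \<forall>n\<ge>M. norm (Rep_ell2 (X m) i - Rep_ell2 (X n) i) < e"
      proof (intro exI allI impI)
        fix m n assume "m \<ge> N" "n \<ge> N"
        have "norm (Rep_ell2 (X m) i - Rep_ell2 (X n) i) = norm (Rep_ell2 (X m - X n) i)" by simp
        also have "\<dots> \<le> norm (X m - X n)" by (rule comp_le_norm)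
        finally show "norm (Rep_ell2 (X m) i - Rep_ell2 (X n) i) < e" using N \<open>m\<ge>N\<close> \<open>n\<ge>N\<close> by force
      qed
    qed
    thus "\<exists>l. (\<lambda>n. Rep_ell2 (X n) i) \<longlonglongrightarrow> l" by (simp add: Cauchy_convergent_iff convergent_def)
  qed
  then obtain L where L: "\<And>i. (\<lambda>n. Rep_ell2 (X n) i) \<longlonglongrightarrow> L i" by metis
  have key: "\<exists>N. \<forall>n\<ge>N. summable (\<lambda>i. (norm (Rep_ell2 (X n) i - L i))^2) \<and>
                     (\<Sum>i. (norm (Rep_ell2 (X n) i - L i))^2) \<le> e^2" if "e > 0" for e :: real
  proof -
    obtain N where N: "\<forall>m\<ge>N. \<forall>n\<ge>N. norm (X m - X n) < e" using cI \<open>e>0\<close> by blast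
    show ?thesis
    proof (intro exI allI impI)
      fix n assume n: "n \<ge> N"
      have bnd: "(\<Sum>i<K. (norm (Rep_ell2 (X n) i - L i))^2) \<le> e^2" for K
      proof (rule LIMSEQ_le_const2)
        show "(\<lambda>m. \<Sum>i<K. (norm (Rep_ell2 (X n) i - Rep_ell2 (X m) i))^2) \<longlonglongrightarrow> (\<Sum>i<K. (norm (Rep_ell2 (X n) i - L i))^2)"
          by (intro tendsto_intros L)
        show "\<exists>M. \<forall>m\<ge>M. (\<Sum>i<K. (norm (Rep_ell2 (X n) i - Rep_ell2 (X m) i))^2) \<le> e^2"
        proof (intro exI allI impI)
          fix m assume m: "m \<ge> N"
          have "(\<Sum>i<K. (norm (Rep_ell2 (X n) i - Rep_ell2 (X m) i))^2) = (\<Sum>i<K. (norm (Rep_ell2 (X n - X m) i))^2)"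
            by simp
          also have "\<dots> \<le> (norm (X n - X m))^2" by (rule sum_sq_le_norm)
          also have "\<dots> \<le> e^2" using N m n by (intro power_mono) (auto intro: less_imp_le)
          finally show "(\<Sum>i<K. (norm (Rep_ell2 (X n) i - Rep_ell2 (X m) i))^2) \<le> e^2" .
        qed
      qed
      have "summable (\<lambda>i. (norm (Rep_ell2 (X n) i - L i))^2)"
        by (rule summableI_nonneg_bounded[OF _ bnd]) simp
      moreover have "(\<Sum>i. (norm (Rep_ell2 (X n) i - L i))^2) \<le> e^2"
        by (rule suminf_le_const[OF calculation bnd])
      ultimately show "summable (\<lambda>i. (norm (Rep_ell2 (X n) i - L i))^2) \<and>
                     (\<Sum>i. (norm (Rep_ell2 (X n) i - L i))^2) \<le> e^2" by blast
    qed
  qed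
  obtain N0 where N0: "summable (\<lambda>i. (norm (Rep_ell2 (X N0) i - L i))^2)"
    using key[of 1] by auto
  have "summable (\<lambda>i. (norm (Rep_ell2 (X N0) i + (-1) * (Rep_ell2 (X N0) i - L i)))^2)"
    by (rule summable_sq_add[OF ell2_summable summable_sq_scale[OF N0]])
  hence "summable (\<lambda>i. (norm (L i))^2)" by simp
  hence RL: "Rep_ell2 (Abs_ell2 L) = L" by (simp add: Abs_ell2_inverse)
  have "X \<longlonglongrightarrow> Abs_ell2 L"
  proof (rule LIMSEQ_I)
    fix r :: real assume "r > 0"
    then obtain N where N: "\<forall>n\<ge>N. summable (\<lambda>i. (norm (Rep_ell2 (X n) i - L i))^2) \<and>
                     (\<Sum>i. (norm (Rep_ell2 (X n) i - L i))^2) \<le> (r/2)^2"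
      using key[of "r/2"] by auto
    show "\<exists>no. \<forall>n\<ge>no. norm (X n - Abs_ell2 L) < r"
    proof (intro exI allI impI)
      fix n assume "n \<ge> N"
      have "(norm (X n - Abs_ell2 L))^2 = (\<Sum>i. (norm (Rep_ell2 (X n) i - L i))^2)"
        by (simp add: norm_ell2_sq RL)
      also have "\<dots> \<le> (r/2)^2" using N \<open>n\<ge>N\<close> by blast
      also have "\<dots> < r^2" using \<open>r>0\<close> by (simp add: power_strict_mono)
      finally show "norm (X n - Abs_ell2 L) < r" using \<open>r>0\<close>
        by (meson less_le_not_le norm_ge_zero power_less_imp_less_base)
    qed
  qed
  thus "convergent X" by (rule convergentI)
qed

instance ell2 :: banach ..


definition cmul :: "complex \<Rightarrow> ell2 \<Rightarrow> ell2" where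
  "cmul c x = Abs_ell2 (\<lambda>i. c * Rep_ell2 x i)"

lemma Rep_cmul[simp]: "Rep_ell2 (cmul c x) = (\<lambda>i. c * Rep_ell2 x i)"
  by (simp add: cmul_def Rep_Abs_scale)

lemma cmul_add: "cmul c (x + y) = cmul c x + cmul c y"
  by (rule ell2_eqI) (simp add: algebra_simps)
lemma cmul_scaleR: "cmul c (r *\<^sub>R x) = r *\<^sub>R cmul c x"
  by (rule ell2_eqI) (simp add: algebra_simps)
lemma cmul_add_left: "cmul (c + d) x = cmul c x + cmul d x"
  by (rule ell2_eqI) (simp add: algebra_simps)
lemma cmul_cmul: "cmul c (cmul d x) = cmul (c * d) x"
  by (rule ell2_eqI) (simp add: algebra_simps)
lemma cmul_one[simp]: "cmul 1 x = x"
  by (rule ell2_eqI) simp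
lemma cmul_zero_right[simp]: "cmul c 0 = 0"
  by (rule ell2_eqI) simp

lemma norm_cmul: "norm (cmul c x) = cmod c * norm x"
proof -
  have "(norm (cmul c x))^2 = (\<Sum>i. (cmod c)^2 * (norm (Rep_ell2 x i))^2)"
    by (simp add: norm_ell2_sq norm_mult power_mult_distrib)
  also have "\<dots> = (cmod c)^2 * (norm x)^2"
    by (simp add: suminf_mult ell2_summable norm_ell2_sq)
  also have "\<dots> = (cmod c * norm x)^2" by (simp add: power_mult_distrib)
  finally show ?thesis by (simp add: power2_eq_iff_nonneg)
qed

lemma bounded_linear_cmul: "bounded_linear (cmul c)"
proof (rule bounded_linear_intro[where K="cmod c"])
  show "\<And>x y. cmul c (x + y) = cmul c x + cmul c y" by (rule cmul_add)
  show "\<And>r x. cmul c (r *\<^sub>R x) = r *\<^sub>R cmul c x" by (rule cmul_scaleR)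
  show "\<And>x. norm (cmul c x) \<le> norm x * cmod c" by (simp add: norm_cmul)
qed

lemma inner_cmul_complex: "inner ((c::complex) * z) w = inner z (cnj c * w)"
  by (simp add: inner_complex_def algebra_simps)

lemma inner_cmul_left: "inner (cmul c x) y = inner x (cmul (cnj c) y)"
  by (simp add: inner_ell2_def inner_cmul_complex)

lemma inner_ext: "(\<And>x. inner x u = inner x (v::ell2)) \<Longrightarrow> u = v"
proof -
  assume h: "\<And>x. inner x u = inner x v"
  have "inner (u - v) (u - v) = 0" using h[of "u - v"] by (simp add: inner_diff_right)
  thus ?thesis by simp
qed

definition CL :: "complex \<Rightarrow> ell2 \<Rightarrow>\<^sub>L ell2" where "CL c = Blinfun (cmul c)"

lemma CL_apply[simp]: "blinfun_apply (CL c) x = cmul c x"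
  by (simp add: CL_def bounded_linear_Blinfun_apply bounded_linear_cmul)

type_synonym op = "ell2 \<Rightarrow>\<^sub>L ell2"

definition clin :: "op \<Rightarrow> bool" where
  "clin T \<longleftrightarrow> (\<forall>c x. T (cmul c x) = cmul c (T x))"

definition is_adj :: "op \<Rightarrow> op \<Rightarrow> bool" where
  "is_adj T S \<longleftrightarrow> (\<forall>x y. inner (T x) y = inner x (S y))"

definition Car :: "op set" where
  "Car = {T. clin T \<and> (\<exists>S. is_adj T S)}"

definition adj :: "op \<Rightarrow> op" where
  "adj T = (SOME S. is_adj T S)"

lemma is_adj_unique: "is_adj T S1 \<Longrightarrow> is_adj T S2 \<Longrightarrow> S1 = S2"
  unfolding is_adj_def by (intro blinfun_eqI inner_ext) metis

lemma is_adj_sym: "is_adj T S \<Longrightarrow> is_adj S T"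
  unfolding is_adj_def by (metis inner_commute)

lemma adj_is_adj: "T \<in> Car \<Longrightarrow> is_adj T (adj T)"
  unfolding Car_def adj_def by (auto intro: someI)

lemma adj_eq: "is_adj T S \<Longrightarrow> adj T = S"
  unfolding adj_def by (metis someI is_adj_unique)

lemma clin_adj: assumes "is_adj T S" "clin T" shows "clin S"
  unfolding clin_def
proof (intro allI)
  fix c y
  show "S (cmul c y) = cmul c (S y)"
  proof (rule inner_ext)
    fix x
    have "inner x (S (cmul c y)) = inner (T x) (cmul c y)" using assms(1) by (simp add: is_adj_def)
    also have "\<dots> = inner (cmul (cnj c) (T x)) y" by (simp add: inner_cmul_left)
    also have "\<dots> = inner (T (cmul (cnj c) x)) y" using assms(2) by (simp add: clin_def)
    also have "\<dots> = inner (cmul (cnj c) x) (S y)" using assms(1) by (simp add: is_adj_def)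
    also have "\<dots> = inner x (cmul c (S y))" by (simp add: inner_cmul_left)
    finally show "inner x (S (cmul c y)) = inner x (cmul c (S y))" .
  qed
qed

lemma adj_Car: "T \<in> Car \<Longrightarrow> adj T \<in> Car"
  using adj_is_adj clin_adj is_adj_sym unfolding Car_def by blast

lemma adj_adj: "T \<in> Car \<Longrightarrow> adj (adj T) = T"
  using adj_is_adj is_adj_sym adj_eq by blast

lemma Car_clin: "T \<in> Car \<Longrightarrow> T (cmul c x) = cmul c (T x)"
  unfolding Car_def clin_def by blast

lemma adj_inner: "T \<in> Car \<Longrightarrow> inner (T x) y = inner x (adj T y)"
  using adj_is_adj unfolding is_adj_def by blast

lemma norm_le_adj: assumes "is_adj T S" shows "norm T \<le> norm S"
proof (rule norm_blinfun_bound)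
  show "0 \<le> norm S" by simp
  fix x
  have "(norm (T x))^2 = inner (T x) (T x)" by (simp add: power2_norm_eq_inner)
  also have "\<dots> = inner x (S (T x))" using assms by (simp add: is_adj_def)
  also have "\<dots> \<le> norm x * norm (S (T x))" by (rule order_trans[OF abs_ge_self Cauchy_Schwarz_ineq2])
  also have "\<dots> \<le> norm x * (norm S * norm (T x))" by (simp add: mult_left_mono norm_blinfun)
  finally have h: "norm (T x) * norm (T x) \<le> (norm S * norm x) * norm (T x)"
    by (simp add: power2_eq_square algebra_simps)
  show "norm (T x) \<le> norm S * norm x"
  proof (cases "norm (T x) = 0")
    case True thus ?thesis by simp
  next
    case False thus ?thesis using h by (simp add: mult_le_cancel_right)
  qed
qed

lemma norm_adj: "T \<in> Car \<Longrightarrow> norm (adj T) = norm T"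
  by (meson adj_is_adj antisym is_adj_sym norm_le_adj)

lemma is_adj_add: "is_adj T S \<Longrightarrow> is_adj U V \<Longrightarrow> is_adj (T + U) (S + V)"
  by (simp add: is_adj_def blinfun.add_left inner_add_left inner_add_right)
lemma is_adj_diff: "is_adj T S \<Longrightarrow> is_adj U V \<Longrightarrow> is_adj (T - U) (S - V)"
  by (simp add: is_adj_def blinfun.diff_left inner_diff_left inner_diff_right)
lemma is_adj_comp: "is_adj T S \<Longrightarrow> is_adj U V \<Longrightarrow> is_adj (T o\<^sub>L U) (V o\<^sub>L S)"
  by (simp add: is_adj_def)
lemma is_adj_CL: "is_adj (CL c) (CL (cnj c))"
  by (simp add: is_adj_def inner_cmul_left)
lemma is_adj_id: "is_adj id_blinfun id_blinfun"
  by (simp add: is_adj_def)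
lemma is_adj_zero: "is_adj 0 0"
  by (simp add: is_adj_def)

lemma clin_add: "clin T \<Longrightarrow> clin U \<Longrightarrow> clin (T + U)"
  by (simp add: clin_def blinfun.add_left cmul_add)
lemma clin_diff: "clin T \<Longrightarrow> clin U \<Longrightarrow> clin (T - U)"
proof -
  have d: "cmul c (x - y) = cmul c x - cmul c y" for c x y by (rule ell2_eqI) (simp add: algebra_simps)
  show "clin T \<Longrightarrow> clin U \<Longrightarrow> clin (T - U)" by (simp add: clin_def blinfun.diff_left d)
qed
lemma clin_comp: "clin T \<Longrightarrow> clin U \<Longrightarrow> clin (T o\<^sub>L U)"
  by (simp add: clin_def)
lemma clin_CL: "clin (CL c)"
  by (simp add: clin_def cmul_cmul mult.commute)
lemma clin_id: "clin id_blinfun" by (simp add: clin_def)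
lemma clin_zero: "clin 0" by (simp add: clin_def)

lemma Car_add: "T \<in> Car \<Longrightarrow> U \<in> Car \<Longrightarrow> T + U \<in> Car"
  unfolding Car_def using clin_add is_adj_add by blast
lemma Car_diff: "T \<in> Car \<Longrightarrow> U \<in> Car \<Longrightarrow> T - U \<in> Car"
  unfolding Car_def using clin_diff is_adj_diff by blast
lemma Car_comp: "T \<in> Car \<Longrightarrow> U \<in> Car \<Longrightarrow> T o\<^sub>L U \<in> Car"
  unfolding Car_def using clin_comp is_adj_comp by blast
lemma Car_CL: "CL c \<in> Car"
  unfolding Car_def using clin_CL is_adj_CL by blast
lemma Car_id: "id_blinfun \<in> Car"
  unfolding Car_def using clin_id is_adj_id by blast
lemma Car_zero: "0 \<in> Car"
  unfolding Car_def using clin_zero is_adj_zero by blast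

lemma adj_add: "T \<in> Car \<Longrightarrow> U \<in> Car \<Longrightarrow> adj (T + U) = adj T + adj U"
  by (intro adj_eq is_adj_add adj_is_adj)
lemma adj_diff: "T \<in> Car \<Longrightarrow> U \<in> Car \<Longrightarrow> adj (T - U) = adj T - adj U"
  by (intro adj_eq is_adj_diff adj_is_adj)
lemma adj_comp: "T \<in> Car \<Longrightarrow> U \<in> Car \<Longrightarrow> adj (T o\<^sub>L U) = adj U o\<^sub>L adj T"
  by (intro adj_eq is_adj_comp adj_is_adj)
lemma adj_CL: "adj (CL c) = CL (cnj c)"
  by (intro adj_eq is_adj_CL)
lemma adj_id: "adj id_blinfun = id_blinfun"
  by (intro adj_eq is_adj_id)
lemma adj_zero: "adj 0 = 0"
  by (intro adj_eq is_adj_zero)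

lemma comp_assoc: "(T o\<^sub>L U) o\<^sub>L V = T o\<^sub>L (U o\<^sub>L V)"
  by (rule blinfun_eqI) simp

lemma CL_add: "CL (c + d) = CL c + CL d"
  by (rule blinfun_eqI) (simp add: blinfun.add_left cmul_add_left)
lemma CL_comp: "CL c o\<^sub>L CL d = CL (c * d)"
  by (rule blinfun_eqI) (simp add: cmul_cmul)
lemma CL_one: "CL 1 = id_blinfun"
  by (rule blinfun_eqI) simp
lemma CL_comm: "T \<in> Car \<Longrightarrow> T o\<^sub>L CL c = CL c o\<^sub>L T"
  by (rule blinfun_eqI) (simp add: Car_clin)
lemma CL_minus1: "CL (-1) o\<^sub>L T = - T"
proof (rule blinfun_eqI)
  fix x
  show "blinfun_apply (CL (-1) o\<^sub>L T) x = blinfun_apply (- T) x"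
    by (simp add: blinfun.minus_left) (rule ell2_eqI, simp)
qed

lemma norm_CL_comp: "norm (CL c o\<^sub>L T) = cmod c * norm T"
proof (rule antisym)
  show "norm (CL c o\<^sub>L T) \<le> cmod c * norm T"
  proof (rule norm_blinfun_bound)
    show "0 \<le> cmod c * norm T" by simp
    fix x show "norm ((CL c o\<^sub>L T) x) \<le> cmod c * norm T * norm x"
      by (simp add: norm_cmul mult.assoc mult_left_mono norm_blinfun)
  qed
  show "cmod c * norm T \<le> norm (CL c o\<^sub>L T)"
  proof (cases "c = 0")
    case True thus ?thesis by simp
  next
    case False
    have "norm T \<le> norm (CL c o\<^sub>L T) / cmod c"
    proof (rule norm_blinfun_bound)
      show "0 \<le> norm (CL c o\<^sub>L T) / cmod c" by simp
      fix x
      have "cmod c * norm (T x) = norm ((CL c o\<^sub>L T) x)" by (simp add: norm_cmul)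
      also have "\<dots> \<le> norm (CL c o\<^sub>L T) * norm x" by (rule norm_blinfun)
      finally show "norm (T x) \<le> norm (CL c o\<^sub>L T) / cmod c * norm x"
        using False by (simp add: field_simps)
    qed
    thus ?thesis using False by (simp add: field_simps)
  qed
qed

lemma cstar_id: assumes "T \<in> Car" shows "norm (adj T o\<^sub>L T) = (norm T)^2"
proof (rule antisym)
  show "norm (adj T o\<^sub>L T) \<le> (norm T)^2"
    using norm_blinfun_compose[of "adj T" T] norm_adj[OF assms] by (simp add: power2_eq_square)
  have "norm T \<le> sqrt (norm (adj T o\<^sub>L T))"
  proof (rule norm_blinfun_bound)
    show "0 \<le> sqrt (norm (adj T o\<^sub>L T))" by simp
    fix x
    have "(norm (T x))^2 = inner (T x) (T x)" by (simp add: power2_norm_eq_inner)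
    also have "\<dots> = inner x ((adj T o\<^sub>L T) x)" using adj_inner[OF assms] by simp
    also have "\<dots> \<le> norm x * norm ((adj T o\<^sub>L T) x)" by (rule order_trans[OF abs_ge_self Cauchy_Schwarz_ineq2])
    also have "\<dots> \<le> norm x * (norm (adj T o\<^sub>L T) * norm x)" by (intro mult_left_mono norm_blinfun norm_ge_zero)
    also have "\<dots> = (sqrt (norm (adj T o\<^sub>L T)) * norm x)^2" by (simp add: power2_eq_square algebra_simps)
    finally show "norm (T x) \<le> sqrt (norm (adj T o\<^sub>L T)) * norm x"
      by (rule power2_le_imp_le) simp
  qed
  thus "(norm T)^2 \<le> norm (adj T o\<^sub>L T)"
    by (metis norm_ge_zero power_mono real_sqrt_pow2)
qed

lemma Car_limit:
  assumes X: "\<And>n. X n \<in> Car" and C: "Cauchy X"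
  shows "\<exists>L\<in>Car. X \<longlonglongrightarrow> L"
proof -
  obtain L where L: "X \<longlonglongrightarrow> L" using C by (auto simp: Cauchy_convergent_iff convergent_def)
  have CA: "Cauchy (\<lambda>n. adj (X n))"
    unfolding Cauchy_iff
  proof (intro allI impI)
    fix e :: real assume "e > 0"
    then obtain M where M: "\<forall>m\<ge>M. \<forall>n\<ge>M. norm (X m - X n) < e" using C by (auto simp: Cauchy_iff)
    show "\<exists>M. \<forall>m\<ge>M. \<forall>n\<ge>M. norm (adj (X m) - adj (X n)) < e"
      using M by (metis X adj_diff Car_diff norm_adj)
  qed
  obtain S where S: "(\<lambda>n. adj (X n)) \<longlonglongrightarrow> S" using CA by (auto simp: Cauchy_convergent_iff convergent_def)
  have ap: "(\<lambda>n. blinfun_apply (X n) x) \<longlonglongrightarrow> L x" for x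
    by (rule blinfun.tendsto[OF L tendsto_const])
  have apS: "(\<lambda>n. blinfun_apply (adj (X n)) x) \<longlonglongrightarrow> S x" for x
    by (rule blinfun.tendsto[OF S tendsto_const])
  have "clin L" unfolding clin_def
  proof (intro allI)
    fix c x
    have "(\<lambda>n. cmul c (X n x)) \<longlonglongrightarrow> cmul c (L x)"
      by (rule bounded_linear.tendsto[OF bounded_linear_cmul ap])
    moreover have "(\<lambda>n. cmul c (X n x)) = (\<lambda>n. X n (cmul c x))" using X by (simp add: Car_clin)
    ultimately show "L (cmul c x) = cmul c (L x)" using ap[of "cmul c x"] LIMSEQ_unique by metis
  qed
  moreover have "is_adj L S" unfolding is_adj_def
  proof (intro allI)
    fix x y
    have "(\<lambda>n. inner (X n x) y) \<longlonglongrightarrow> inner (L x) y" by (intro tendsto_intros ap)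
    moreover have "(\<lambda>n. inner x (adj (X n) y)) \<longlonglongrightarrow> inner x (S y)" by (intro tendsto_intros apS)
    moreover have "(\<lambda>n. inner (X n x) y) = (\<lambda>n. inner x (adj (X n) y))" using X by (simp add: adj_inner)
    ultimately show "inner (L x) y = inner x (S y)" using LIMSEQ_unique by metis
  qed
  ultimately have "L \<in> Car" unfolding Car_def by blast
  thus ?thesis using L by blast
qed


lemma comp_add_right: "T o\<^sub>L (U + V) = (T o\<^sub>L U) + (T o\<^sub>L V)"
  by (rule blinfun_eqI) (simp add: blinfun.add_left blinfun.add_right)
lemma comp_add_left: "(T + U) o\<^sub>L V = (T o\<^sub>L V) + (U o\<^sub>L V)"
  by (rule blinfun_eqI) (simp add: blinfun.add_left)
lemma id_comp[simp]: "id_blinfun o\<^sub>L T = T"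
  by (rule blinfun_eqI) simp
lemma comp_id[simp]: "T o\<^sub>L id_blinfun = T"
  by (rule blinfun_eqI) simp

definition BB :: "op cstar" where
  "BB = \<lparr>cs_carrier = Car, cs_zero = 0, cs_add = (+), cs_smult = (\<lambda>c T. CL c o\<^sub>L T),
         cs_mult = (o\<^sub>L), cs_star = adj, cs_norm = norm\<rparr>"

lemma dist_BB: "cs_dist BB x y = norm (x - y)"
  by (simp add: cs_dist_def BB_def CL_minus1)

lemma cstar_BB: "cstar_algebra BB"
  unfolding cstar_algebra_def Let_def
proof (intro conjI)
  show "cs_zero BB \<in> cs_carrier BB" by (simp add: BB_def Car_zero)
  show "\<forall>x\<in>cs_carrier BB. \<forall>y\<in>cs_carrier BB. cs_add BB x y \<in> cs_carrier BB \<and> cs_mult BB x y \<in> cs_carrier BB"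
    by (simp add: BB_def Car_add Car_comp)
  show "\<forall>c. \<forall>x\<in>cs_carrier BB. cs_smult BB c x \<in> cs_carrier BB"
    by (simp add: BB_def Car_CL Car_comp)
  show "\<forall>x\<in>cs_carrier BB. cs_star BB x \<in> cs_carrier BB"
    by (simp add: BB_def adj_Car)
  show "\<forall>x\<in>cs_carrier BB. \<forall>y\<in>cs_carrier BB. \<forall>w\<in>cs_carrier BB.
          cs_add BB (cs_add BB x y) w = cs_add BB x (cs_add BB y w)"
    by (simp add: BB_def add.assoc)
  show "\<forall>x\<in>cs_carrier BB. \<forall>y\<in>cs_carrier BB. cs_add BB x y = cs_add BB y x"
    by (simp add: BB_def add.commute)
  show "\<forall>x\<in>cs_carrier BB. cs_add BB (cs_zero BB) x = x"
    by (simp add: BB_def)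
  show "\<forall>x\<in>cs_carrier BB. \<exists>y\<in>cs_carrier BB. cs_add BB x y = cs_zero BB"
  proof
    fix x assume "x \<in> cs_carrier BB"
    hence "- x \<in> Car" using Car_diff[OF Car_zero, of x] by (simp add: BB_def)
    thus "\<exists>y\<in>cs_carrier BB. cs_add BB x y = cs_zero BB"
      by (intro bexI[of _ "- x"]) (simp_all add: BB_def)
  qed
  show "\<forall>c. \<forall>x\<in>cs_carrier BB. \<forall>y\<in>cs_carrier BB.
          cs_smult BB c (cs_add BB x y) = cs_add BB (cs_smult BB c x) (cs_smult BB c y)"
    by (simp add: BB_def comp_add_right)
  show "\<forall>c d. \<forall>x\<in>cs_carrier BB. cs_smult BB (c + d) x = cs_add BB (cs_smult BB c x) (cs_smult BB d x)"
    by (simp add: BB_def CL_add comp_add_left)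
  show "\<forall>c d. \<forall>x\<in>cs_carrier BB. cs_smult BB c (cs_smult BB d x) = cs_smult BB (c * d) x"
    by (simp add: BB_def CL_comp flip: comp_assoc)
  show "\<forall>x\<in>cs_carrier BB. cs_smult BB 1 x = x"
    by (simp add: BB_def CL_one)
  show "\<forall>x\<in>cs_carrier BB. \<forall>y\<in>cs_carrier BB. \<forall>w\<in>cs_carrier BB.
          cs_mult BB (cs_mult BB x y) w = cs_mult BB x (cs_mult BB y w)"
    by (simp add: BB_def comp_assoc)
  show "\<forall>x\<in>cs_carrier BB. \<forall>y\<in>cs_carrier BB. \<forall>w\<in>cs_carrier BB.
          cs_mult BB x (cs_add BB y w) = cs_add BB (cs_mult BB x y) (cs_mult BB x w)"
    by (simp add: BB_def comp_add_right)
  show "\<forall>x\<in>cs_carrier BB. \<forall>y\<in>cs_carrier BB. \<forall>w\<in>cs_carrier BB.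
          cs_mult BB (cs_add BB x y) w = cs_add BB (cs_mult BB x w) (cs_mult BB y w)"
    by (simp add: BB_def comp_add_left)
  show "\<forall>c. \<forall>x\<in>cs_carrier BB. \<forall>y\<in>cs_carrier BB.
          cs_mult BB (cs_smult BB c x) y = cs_smult BB c (cs_mult BB x y) \<and>
          cs_mult BB x (cs_smult BB c y) = cs_smult BB c (cs_mult BB x y)"
  proof (intro allI ballI conjI)
    fix c x y assume x: "x \<in> cs_carrier BB" and y: "y \<in> cs_carrier BB"
    show "cs_mult BB (cs_smult BB c x) y = cs_smult BB c (cs_mult BB x y)"
      by (simp add: BB_def comp_assoc)
    have "x o\<^sub>L (CL c o\<^sub>L y) = (x o\<^sub>L CL c) o\<^sub>L y" by (simp add: comp_assoc)
    also have "\<dots> = CL c o\<^sub>L (x o\<^sub>L y)" using x by (simp add: BB_def CL_comm comp_assoc)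
    finally show "cs_mult BB x (cs_smult BB c y) = cs_smult BB c (cs_mult BB x y)"
      by (simp add: BB_def)
  qed
  show "\<forall>x\<in>cs_carrier BB. cs_star BB (cs_star BB x) = x"
    by (simp add: BB_def adj_adj)
  show "\<forall>x\<in>cs_carrier BB. \<forall>y\<in>cs_carrier BB. cs_star BB (cs_add BB x y) = cs_add BB (cs_star BB x) (cs_star BB y)"
    by (simp add: BB_def adj_add)
  show "\<forall>c. \<forall>x\<in>cs_carrier BB. cs_star BB (cs_smult BB c x) = cs_smult BB (cnj c) (cs_star BB x)"
    by (simp add: BB_def adj_comp Car_CL adj_CL CL_comm adj_Car)
  show "\<forall>x\<in>cs_carrier BB. \<forall>y\<in>cs_carrier BB. cs_star BB (cs_mult BB x y) = cs_mult BB (cs_star BB y) (cs_star BB x)"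
    by (simp add: BB_def adj_comp)
  show "\<forall>x\<in>cs_carrier BB. (cs_norm BB x = 0) = (x = cs_zero BB)"
    by (simp add: BB_def)
  show "\<forall>c. \<forall>x\<in>cs_carrier BB. cs_norm BB (cs_smult BB c x) = cmod c * cs_norm BB x"
    by (simp add: BB_def norm_CL_comp)
  show "\<forall>x\<in>cs_carrier BB. \<forall>y\<in>cs_carrier BB. cs_norm BB (cs_add BB x y) \<le> cs_norm BB x + cs_norm BB y"
    by (simp add: BB_def norm_triangle_ineq)
  show "\<forall>x\<in>cs_carrier BB. \<forall>y\<in>cs_carrier BB. cs_norm BB (cs_mult BB x y) \<le> cs_norm BB x * cs_norm BB y"
    by (simp add: BB_def norm_blinfun_compose)
  show "\<forall>x\<in>cs_carrier BB. cs_norm BB (cs_mult BB (cs_star BB x) x) = (cs_norm BB x)\<^sup>2"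
    by (simp add: BB_def cstar_id)
  show "\<forall>X. (\<forall>n. X n \<in> cs_carrier BB) \<and> (\<forall>e>0. \<exists>N. \<forall>m\<ge>N. \<forall>n\<ge>N. cs_dist BB (X m) (X n) < e) \<longrightarrow>
         (\<exists>L\<in>cs_carrier BB. (\<lambda>n. cs_dist BB (X n) L) \<longlonglongrightarrow> 0)"
  proof (intro allI impI, elim conjE)
    fix X :: "nat \<Rightarrow> op"
    assume X: "\<forall>n. X n \<in> cs_carrier BB" and C: "\<forall>e>0. \<exists>N. \<forall>m\<ge>N. \<forall>n\<ge>N. cs_dist BB (X m) (X n) < e"
    have "Cauchy X" using C unfolding Cauchy_iff dist_BB .
    then obtain L where L: "L \<in> Car" "X \<longlonglongrightarrow> L" using Car_limit X by (auto simp: BB_def)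
    have "(\<lambda>n. norm (X n - L)) \<longlonglongrightarrow> norm (L - L)" by (intro tendsto_intros L)
    moreover have "L \<in> cs_carrier BB" using L by (simp add: BB_def)
    ultimately show "\<exists>L\<in>cs_carrier BB. (\<lambda>n. cs_dist BB (X n) L) \<longlonglongrightarrow> 0"
      by (intro bexI[of _ L]) (simp_all add: dist_BB)
  qed
qed


definition tr :: "('b \<Rightarrow> 'x) \<Rightarrow> ('x \<Rightarrow> 'b) \<Rightarrow> 'b cstar \<Rightarrow> 'x cstar" where
  "tr e d B = \<lparr>cs_carrier = e ` cs_carrier B, cs_zero = e (cs_zero B),
     cs_add = (\<lambda>x y. e (cs_add B (d x) (d y))), cs_smult = (\<lambda>c x. e (cs_smult B c (d x))),
     cs_mult = (\<lambda>x y. e (cs_mult B (d x) (d y))), cs_star = (\<lambda>x. e (cs_star B (d x))),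
     cs_norm = (\<lambda>x. cs_norm B (d x))\<rparr>"

lemma ball_img: "(\<forall>x\<in>f ` A. P x) = (\<forall>a\<in>A. P (f a))" by blast
lemma bex_img: "(\<exists>x\<in>f ` A. P x) = (\<exists>a\<in>A. P (f a))" by blast

lemma tr_cstar:
  assumes B: "cstar_algebra B" and de: "\<And>x. x \<in> cs_carrier B \<Longrightarrow> d (e x) = x"
  shows "cstar_algebra (tr e d B)"
proof -
  define C where "C = cs_carrier B"
  define z where "z = cs_zero B"
  define ad where "ad = cs_add B"
  define sm where "sm = cs_smult B"
  define mu where "mu = cs_mult B"
  define st where "st = cs_star B"
  define nm where "nm = cs_norm B"
  have H: "z \<in> C \<and>
     (\<forall>x\<in>C. \<forall>y\<in>C. ad x y \<in> C \<and> mu x y \<in> C) \<and>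
     (\<forall>c. \<forall>x\<in>C. sm c x \<in> C) \<and>
     (\<forall>x\<in>C. st x \<in> C) \<and>
     (\<forall>x\<in>C. \<forall>y\<in>C. \<forall>w\<in>C. ad (ad x y) w = ad x (ad y w)) \<and>
     (\<forall>x\<in>C. \<forall>y\<in>C. ad x y = ad y x) \<and>
     (\<forall>x\<in>C. ad z x = x) \<and>
     (\<forall>x\<in>C. \<exists>y\<in>C. ad x y = z) \<and>
     (\<forall>c. \<forall>x\<in>C. \<forall>y\<in>C. sm c (ad x y) = ad (sm c x) (sm c y)) \<and>
     (\<forall>c d. \<forall>x\<in>C. sm (c + d) x = ad (sm c x) (sm d x)) \<and>
     (\<forall>c d. \<forall>x\<in>C. sm c (sm d x) = sm (c * d) x) \<and>
     (\<forall>x\<in>C. sm 1 x = x) \<and>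
     (\<forall>x\<in>C. \<forall>y\<in>C. \<forall>w\<in>C. mu (mu x y) w = mu x (mu y w)) \<and>
     (\<forall>x\<in>C. \<forall>y\<in>C. \<forall>w\<in>C. mu x (ad y w) = ad (mu x y) (mu x w)) \<and>
     (\<forall>x\<in>C. \<forall>y\<in>C. \<forall>w\<in>C. mu (ad x y) w = ad (mu x w) (mu y w)) \<and>
     (\<forall>c. \<forall>x\<in>C. \<forall>y\<in>C. mu (sm c x) y = sm c (mu x y) \<and> mu x (sm c y) = sm c (mu x y)) \<and>
     (\<forall>x\<in>C. st (st x) = x) \<and>
     (\<forall>x\<in>C. \<forall>y\<in>C. st (ad x y) = ad (st x) (st y)) \<and>
     (\<forall>c. \<forall>x\<in>C. st (sm c x) = sm (cnj c) (st x)) \<and>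
     (\<forall>x\<in>C. \<forall>y\<in>C. st (mu x y) = mu (st y) (st x)) \<and>
     (\<forall>x\<in>C. nm x = 0 \<longleftrightarrow> x = z) \<and>
     (\<forall>c. \<forall>x\<in>C. nm (sm c x) = cmod c * nm x) \<and>
     (\<forall>x\<in>C. \<forall>y\<in>C. nm (ad x y) \<le> nm x + nm y) \<and>
     (\<forall>x\<in>C. \<forall>y\<in>C. nm (mu x y) \<le> nm x * nm y) \<and>
     (\<forall>x\<in>C. nm (mu (st x) x) = (nm x)\<^sup>2) \<and>
     (\<forall>X. (\<forall>n. X n \<in> C) \<and>
          (\<forall>e>0. \<exists>N. \<forall>m\<ge>N. \<forall>n\<ge>N. nm (ad (X m) (sm (-1) (X n))) < e) \<longrightarrow>
          (\<exists>L\<in>C. (\<lambda>n. nm (ad (X n) (sm (-1) L))) \<longlonglongrightarrow> 0))"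
    using B unfolding cstar_algebra_def Let_def cs_dist_def C_def z_def ad_def sm_def mu_def st_def nm_def .
  have de': "\<And>x. x \<in> C \<Longrightarrow> d (e x) = x" using de C_def by simp
  from H have c1: "z \<in> C" and c2: "\<And>x y. x \<in> C \<Longrightarrow> y \<in> C \<Longrightarrow> ad x y \<in> C"
    and c3: "\<And>x y. x \<in> C \<Longrightarrow> y \<in> C \<Longrightarrow> mu x y \<in> C"
    and c4: "\<And>c x. x \<in> C \<Longrightarrow> sm c x \<in> C" and c5: "\<And>x. x \<in> C \<Longrightarrow> st x \<in> C" by auto
  have inj: "\<And>x y. x \<in> C \<Longrightarrow> y \<in> C \<Longrightarrow> (e x = e y) = (x = y)" by (metis de')
  have G: "e z \<in> e ` C \<and>
     (\<forall>x\<in>e ` C. \<forall>y\<in>e ` C. e (ad (d x) (d y)) \<in> e ` C \<and> e (mu (d x) (d y)) \<in> e ` C) \<and>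
     (\<forall>c. \<forall>x\<in>e ` C. e (sm c (d x)) \<in> e ` C) \<and>
     (\<forall>x\<in>e ` C. e (st (d x)) \<in> e ` C) \<and>
     (\<forall>x\<in>e ` C. \<forall>y\<in>e ` C. \<forall>w\<in>e ` C. e (ad (d (e (ad (d x) (d y)))) (d w)) = e (ad (d x) (d (e (ad (d y) (d w)))))) \<and>
     (\<forall>x\<in>e ` C. \<forall>y\<in>e ` C. e (ad (d x) (d y)) = e (ad (d y) (d x))) \<and>
     (\<forall>x\<in>e ` C. e (ad (d (e z)) (d x)) = x) \<and>
     (\<forall>x\<in>e ` C. \<exists>y\<in>e ` C. e (ad (d x) (d y)) = e z) \<and>
     (\<forall>c. \<forall>x\<in>e ` C. \<forall>y\<in>e ` C. e (sm c (d (e (ad (d x) (d y))))) = e (ad (d (e (sm c (d x)))) (d (e (sm c (d y)))))) \<and>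
     (\<forall>c d'. \<forall>x\<in>e ` C. e (sm (c + d') (d x)) = e (ad (d (e (sm c (d x)))) (d (e (sm d' (d x)))))) \<and>
     (\<forall>c d'. \<forall>x\<in>e ` C. e (sm c (d (e (sm d' (d x))))) = e (sm (c * d') (d x))) \<and>
     (\<forall>x\<in>e ` C. e (sm 1 (d x)) = x) \<and>
     (\<forall>x\<in>e ` C. \<forall>y\<in>e ` C. \<forall>w\<in>e ` C. e (mu (d (e (mu (d x) (d y)))) (d w)) = e (mu (d x) (d (e (mu (d y) (d w)))))) \<and>
     (\<forall>x\<in>e ` C. \<forall>y\<in>e ` C. \<forall>w\<in>e ` C. e (mu (d x) (d (e (ad (d y) (d w))))) = e (ad (d (e (mu (d x) (d y)))) (d (e (mu (d x) (d w)))))) \<and>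
     (\<forall>x\<in>e ` C. \<forall>y\<in>e ` C. \<forall>w\<in>e ` C. e (mu (d (e (ad (d x) (d y)))) (d w)) = e (ad (d (e (mu (d x) (d w)))) (d (e (mu (d y) (d w)))))) \<and>
     (\<forall>c. \<forall>x\<in>e ` C. \<forall>y\<in>e ` C. e (mu (d (e (sm c (d x)))) (d y)) = e (sm c (d (e (mu (d x) (d y))))) \<and>
          e (mu (d x) (d (e (sm c (d y))))) = e (sm c (d (e (mu (d x) (d y)))))) \<and>
     (\<forall>x\<in>e ` C. e (st (d (e (st (d x))))) = x) \<and>
     (\<forall>x\<in>e ` C. \<forall>y\<in>e ` C. e (st (d (e (ad (d x) (d y))))) = e (ad (d (e (st (d x)))) (d (e (st (d y)))))) \<and>
     (\<forall>c. \<forall>x\<in>e ` C. e (st (d (e (sm c (d x))))) = e (sm (cnj c) (d (e (st (d x)))))) \<and>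
     (\<forall>x\<in>e ` C. \<forall>y\<in>e ` C. e (st (d (e (mu (d x) (d y))))) = e (mu (d (e (st (d y)))) (d (e (st (d x)))))) \<and>
     (\<forall>x\<in>e ` C. nm (d x) = 0 \<longleftrightarrow> x = e z) \<and>
     (\<forall>c. \<forall>x\<in>e ` C. nm (d (e (sm c (d x)))) = cmod c * nm (d x)) \<and>
     (\<forall>x\<in>e ` C. \<forall>y\<in>e ` C. nm (d (e (ad (d x) (d y)))) \<le> nm (d x) + nm (d y)) \<and>
     (\<forall>x\<in>e ` C. \<forall>y\<in>e ` C. nm (d (e (mu (d x) (d y)))) \<le> nm (d x) * nm (d y)) \<and>
     (\<forall>x\<in>e ` C. nm (d (e (mu (d (e (st (d x)))) (d x)))) = (nm (d x))\<^sup>2)"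
    apply (simp add: ball_img bex_img de' c1 c2 c3 c4 c5 inj)
    using H apply -
    apply (elim conjE)
    apply (intro conjI)
    by assumption+
  have G2: "\<forall>X. (\<forall>n. X n \<in> e ` C) \<and>
          (\<forall>ep>0. \<exists>N. \<forall>m\<ge>N. \<forall>n\<ge>N. nm (d (e (ad (d (X m)) (d (e (sm (-1) (d (X n)))))))) < ep) \<longrightarrow>
          (\<exists>L\<in>e ` C. (\<lambda>n. nm (d (e (ad (d (X n)) (d (e (sm (-1) (d L)))))))) \<longlonglongrightarrow> 0)"
  proof (intro allI impI, elim conjE)
    fix X :: "nat \<Rightarrow> _" assume X: "\<forall>n. X n \<in> e ` C"
      and Cy: "\<forall>ep>0. \<exists>N. \<forall>m\<ge>N. \<forall>n\<ge>N. nm (d (e (ad (d (X m)) (d (e (sm (-1) (d (X n)))))))) < ep"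
    define Y where "Y n = d (X n)" for n
    have YY: "Y n \<in> C \<and> X n = e (Y n)" for n
    proof -
      obtain a where "a \<in> C" "X n = e a" using X by blast
      thus ?thesis using de' unfolding Y_def by simp
    qed
    hence Y: "\<And>n. Y n \<in> C" and XY: "\<And>n. X n = e (Y n)" by auto
    have cy: "\<forall>ep>0. \<exists>N. \<forall>m\<ge>N. \<forall>n\<ge>N. nm (ad (Y m) (sm (-1) (Y n))) < ep"
      using Cy by (simp add: XY de' Y c2 c4)
    have Hc: "\<forall>X. (\<forall>n. X n \<in> C) \<and>
          (\<forall>e>0. \<exists>N. \<forall>m\<ge>N. \<forall>n\<ge>N. nm (ad (X m) (sm (-1) (X n))) < e) \<longrightarrow>
          (\<exists>L\<in>C. (\<lambda>n. nm (ad (X n) (sm (-1) L))) \<longlonglongrightarrow> 0)"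
      using H by (elim conjE) assumption
    have "\<exists>L\<in>C. (\<lambda>n. nm (ad (Y n) (sm (-1) L))) \<longlonglongrightarrow> 0"
      using Hc Y cy by blast
    then obtain L where L: "L \<in> C" "(\<lambda>n. nm (ad (Y n) (sm (-1) L))) \<longlonglongrightarrow> 0" by blast
    show "\<exists>L\<in>e ` C. (\<lambda>n. nm (d (e (ad (d (X n)) (d (e (sm (-1) (d L)))))))) \<longlonglongrightarrow> 0"
      using L by (intro bexI[of _ "e L"]) (simp_all add: XY de' Y c2 c4)
  qed
  show ?thesis
    unfolding cstar_algebra_def Let_def cs_dist_def tr_def cstar.simps
    using G G2 unfolding C_def z_def ad_def sm_def mu_def st_def nm_def
    apply -
    apply (elim conjE)
    apply (intro conjI)
    by assumption+
qed


definition enc :: "op \<Rightarrow> cs_elem" where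
  "enc T = (\<lambda>v. Rep_ell2 (T (Abs_ell2 v)))"
definition dec :: "cs_elem \<Rightarrow> op" where
  "dec F = Blinfun (\<lambda>x. Abs_ell2 (F (Rep_ell2 x)))"

lemma dec_enc[simp]: "dec (enc T) = T"
  by (simp add: enc_def dec_def Rep_ell2_inverse blinfun_apply_inverse)

definition AA :: "cs_elem cstar" where "AA = tr enc dec BB"

lemma cstar_AA: "cstar_algebra AA"
  unfolding AA_def by (rule tr_cstar[OF cstar_BB]) simp

definition sc :: "complex \<Rightarrow> op \<Rightarrow> op" where "sc c T = CL c o\<^sub>L T"

lemma CL_zero: "CL 0 = 0"
  by (rule blinfun_eqI) (simp add: cmul_def zero_ell2_def)
lemma sc_zero[simp]: "sc 0 T = 0" by (simp add: sc_def CL_zero)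
lemma CL_diff: "CL (a - b) = CL a - CL b"
proof (rule blinfun_eqI)
  fix x show "blinfun_apply (CL (a - b)) x = blinfun_apply (CL a - CL b) x"
    by (simp add: blinfun.diff_left) (rule ell2_eqI, simp add: algebra_simps)
qed
lemma comp_diff_left: "(T - U) o\<^sub>L W = (T o\<^sub>L W) - (U o\<^sub>L W)"
  by (rule blinfun_eqI) (simp add: blinfun.diff_left)
lemma sc_diff: "sc (a - b) T = sc a T - sc b T" by (simp add: sc_def CL_diff comp_diff_left)
lemma sc_add: "sc (a + b) T = sc a T + sc b T" by (simp add: sc_def CL_add comp_add_left)
lemma sc_mult: "sc (a * b) T = CL a o\<^sub>L sc b T" by (simp add: sc_def CL_comp flip: comp_assoc)
lemma sc_Car: "T \<in> Car \<Longrightarrow> sc c T \<in> Car" by (simp add: sc_def Car_comp Car_CL)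
lemma sc_adj: "T \<in> Car \<Longrightarrow> adj (sc c T) = sc (cnj c) (adj T)"
  by (simp add: sc_def adj_comp Car_CL adj_CL CL_comm adj_Car)
lemma sc_comp: "T \<in> Car \<Longrightarrow> sc (a * b) (T o\<^sub>L U) = sc a T o\<^sub>L sc b U"
proof -
  assume T: "T \<in> Car"
  have "sc a T o\<^sub>L sc b U = CL a o\<^sub>L (T o\<^sub>L CL b) o\<^sub>L U" by (simp add: sc_def comp_assoc)
  also have "\<dots> = CL a o\<^sub>L (CL b o\<^sub>L T) o\<^sub>L U" using T by (simp add: CL_comm)
  also have "\<dots> = sc (a * b) (T o\<^sub>L U)" by (simp add: sc_def comp_assoc flip: CL_comp)
  finally show ?thesis by simp
qed

lemma Car_sum: "(\<And>s. s \<in> F \<Longrightarrow> g s \<in> Car) \<Longrightarrow> sum g F \<in> Car"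
  by (induction F rule: infinite_finite_induct) (auto simp: Car_zero Car_add)
lemma adj_sum: "(\<And>s. s \<in> F \<Longrightarrow> g s \<in> Car) \<Longrightarrow> adj (sum g F) = (\<Sum>s\<in>F. adj (g s))"
proof (induction F rule: infinite_finite_induct)
  case (insert x F)
  thus ?case by (simp add: adj_add Car_sum)
qed (auto simp: adj_zero)
lemma comp_sum_left: "(sum g F) o\<^sub>L U = (\<Sum>s\<in>F. g s o\<^sub>L U)"
  by (induction F rule: infinite_finite_induct) (auto simp: comp_add_left)
lemma comp_sum_right: "U o\<^sub>L (sum g F) = (\<Sum>s\<in>F. U o\<^sub>L g s)"
  by (induction F rule: infinite_finite_induct) (auto simp: comp_add_right)
lemma sc_sum: "sc (sum h F) T = (\<Sum>s\<in>F. sc (h s) T)"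
  by (induction F rule: infinite_finite_induct) (auto simp: sc_add)

definition pi0 :: "('a \<Rightarrow> op) \<Rightarrow> ('a \<Rightarrow> complex) \<Rightarrow> op" where
  "pi0 V f = (\<Sum>s\<in>{s. f s \<noteq> 0}. sc (f s) (V s))"

lemma pi0_on: assumes "finite F" "{s. f s \<noteq> 0} \<subseteq> F"
  shows "pi0 V f = (\<Sum>s\<in>F. sc (f s) (V s))"
  unfolding pi0_def by (rule sum.mono_neutral_left) (use assms in auto)

lemma faithful_from_ops:
  fixes V :: "'a \<Rightarrow> op"
  assumes VC: "\<And>s. V s \<in> Car" and Vm: "\<And>s t. V (mul s t) = V s o\<^sub>L V t"
    and Vi: "\<And>s. V (invl s) = adj (V s)" and inv: "\<And>s. invl (invl s) = s"
    and ind: "\<And>F c. finite F \<Longrightarrow> (\<Sum>s\<in>F. sc (c s) (V s)) = 0 \<Longrightarrow> \<forall>s\<in>F. c s = 0"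
  shows "has_faithful_cstar_rep mul invl"
proof -
  define P where "P = pi0 V"
  define pi where "pi f = enc (P f)" for f
  have PC: "P f \<in> Car" for f unfolding P_def pi0_def by (intro Car_sum sc_Car VC)
  have fin: "f \<in> salg_carrier \<Longrightarrow> finite {s. f s \<noteq> 0}" for f :: "'a \<Rightarrow> complex"
    by (simp add: salg_carrier_def)
  have add: "P (\<lambda>s. f s + g s) = P f + P g" if "f \<in> salg_carrier" "g \<in> salg_carrier" for f g
  proof -
    let ?F = "{s. f s \<noteq> 0} \<union> {s. g s \<noteq> 0}"
    have F: "finite ?F" using fin that by auto
    have "P (\<lambda>s. f s + g s) = (\<Sum>s\<in>?F. sc (f s + g s) (V s))"
      unfolding P_def by (rule pi0_on[OF F]) auto
    also have "\<dots> = (\<Sum>s\<in>?F. sc (f s) (V s)) + (\<Sum>s\<in>?F. sc (g s) (V s))"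
      by (simp add: sc_add sum.distrib)
    also have "\<dots> = P f + P g"
      unfolding P_def by (subst (1 2) pi0_on[OF F]) auto
    finally show ?thesis .
  qed
  have smul: "P (\<lambda>s. c * f s) = CL c o\<^sub>L P f" if "f \<in> salg_carrier" for f c
  proof -
    let ?F = "{s. f s \<noteq> 0}"
    have F: "finite ?F" using fin that by auto
    have "P (\<lambda>s. c * f s) = (\<Sum>s\<in>?F. sc (c * f s) (V s))"
      unfolding P_def by (rule pi0_on[OF F]) auto
    also have "\<dots> = CL c o\<^sub>L P f"
      unfolding P_def pi0_def by (simp add: sc_mult comp_sum_right)
    finally show ?thesis .
  qed
  have mult: "P (salg_mult mul f g) = P f o\<^sub>L P g" if "f \<in> salg_carrier" "g \<in> salg_carrier" for f g
  proof -
    let ?Sf = "{s. f s \<noteq> 0}" and ?Sg = "{s. g s \<noteq> 0}"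
    let ?Q = "?Sf \<times> ?Sg" and ?m = "\<lambda>p. mul (fst p) (snd p)"
    let ?U = "?m ` ?Q"
    have Q: "finite ?Q" using fin that by auto
    hence U: "finite ?U" by simp
    have sm_eq: "salg_mult mul f g u = (\<Sum>p\<in>{p. p \<in> ?Q \<and> ?m p = u}. f (fst p) * g (snd p))" for u
      unfolding salg_mult_def by (rule sum.cong) auto
    have supp: "{u. salg_mult mul f g u \<noteq> 0} \<subseteq> ?U"
    proof
      fix u assume "u \<in> {u. salg_mult mul f g u \<noteq> 0}"
      hence "(\<Sum>p\<in>{p. p \<in> ?Q \<and> ?m p = u}. f (fst p) * g (snd p)) \<noteq> 0" using sm_eq[of u] by simp
      hence "{p. p \<in> ?Q \<and> ?m p = u} \<noteq> {}" by (metis sum.empty)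
      then obtain p where "p \<in> ?Q" "?m p = u" by blast
      thus "u \<in> ?U" by (auto intro!: image_eqI[where x=p])
    qed
    have "P (salg_mult mul f g) = (\<Sum>u\<in>?U. sc (salg_mult mul f g u) (V u))"
      unfolding P_def by (rule pi0_on[OF U supp])
    also have "\<dots> = (\<Sum>u\<in>?U. \<Sum>p\<in>{p. p \<in> ?Q \<and> ?m p = u}. sc (f (fst p) * g (snd p)) (V (?m p)))"
      by (rule sum.cong[OF refl]) (simp add: sm_eq sc_sum)
    also have "\<dots> = (\<Sum>p\<in>?Q. sc (f (fst p) * g (snd p)) (V (?m p)))"
      by (rule sum.group[OF Q U]) auto
    also have "\<dots> = (\<Sum>p\<in>?Q. sc (f (fst p)) (V (fst p)) o\<^sub>L sc (g (snd p)) (V (snd p)))"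
      by (rule sum.cong[OF refl]) (simp add: Vm sc_comp VC)
    also have "\<dots> = (\<Sum>s\<in>?Sf. \<Sum>t\<in>?Sg. sc (f s) (V s) o\<^sub>L sc (g t) (V t))"
      by (simp add: sum.cartesian_product case_prod_beta)
    also have "\<dots> = P f o\<^sub>L P g"
      unfolding P_def pi0_def by (simp only: comp_sum_left) (simp only: comp_sum_right)
    finally show ?thesis .
  qed
  have star: "P (salg_star invl f) = adj (P f)" if "f \<in> salg_carrier" for f
  proof -
    let ?Sf = "{s. f s \<noteq> 0}"
    have injv: "inj_on invl A" for A by (metis inj_onI inv)
    have Sst: "{s. salg_star invl f s \<noteq> 0} = invl ` ?Sf"
    proof (rule set_eqI, rule iffI)
      fix s assume "s \<in> {s. salg_star invl f s \<noteq> 0}"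
      hence "f (invl s) \<noteq> 0" by (simp add: salg_star_def)
      thus "s \<in> invl ` ?Sf" by (intro image_eqI[where x="invl s"]) (simp_all add: inv)
    next
      fix s assume "s \<in> invl ` ?Sf"
      then obtain t where "f t \<noteq> 0" "s = invl t" by auto
      thus "s \<in> {s. salg_star invl f s \<noteq> 0}" by (simp add: salg_star_def inv)
    qed
    have "P (salg_star invl f) = (\<Sum>s\<in>invl ` ?Sf. sc (cnj (f (invl s))) (V s))"
      unfolding P_def pi0_def Sst by (simp add: salg_star_def)
    also have "\<dots> = (\<Sum>t\<in>?Sf. sc (cnj (f t)) (V (invl t)))"
      by (simp add: sum.reindex[OF injv] inv)
    also have "\<dots> = (\<Sum>t\<in>?Sf. adj (sc (f t) (V t)))"
      by (simp add: Vi sc_adj VC)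
    also have "\<dots> = adj (P f)"
      unfolding P_def pi0_def by (simp add: adj_sum sc_Car VC)
    finally show ?thesis .
  qed
  have hom: "star_hom_into mul invl AA pi"
    unfolding star_hom_into_def AA_def tr_def BB_def pi_def
    by (simp add: PC add smul mult star)
  have inj: "inj_on pi salg_carrier"
  proof (rule inj_onI)
    fix f g assume f: "f \<in> salg_carrier" and g: "g \<in> salg_carrier" and e: "pi f = pi g"
    have "dec (pi f) = dec (pi g)" using e by simp
    hence "P f = P g" by (simp add: pi_def)
    let ?F = "{s. f s \<noteq> 0} \<union> {s. g s \<noteq> 0}"
    have F: "finite ?F" using fin f g by auto
    have "(\<Sum>s\<in>?F. sc (f s) (V s)) = (\<Sum>s\<in>?F. sc (g s) (V s))"
      using \<open>P f = P g\<close> unfolding P_def by (simp add: pi0_on[OF F])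
    hence "(\<Sum>s\<in>?F. sc (f s - g s) (V s)) = 0"
      by (simp add: sc_diff sum_subtractf)
    hence "\<forall>s\<in>?F. f s - g s = 0" by (rule ind[OF F])
    hence "\<forall>s\<in>?F. f s = g s" by (simp only: right_minus_eq)
    hence h: "\<And>s. s \<in> ?F \<Longrightarrow> f s = g s" by blast
    show "f = g"
    proof
      fix s show "f s = g s" using h[of s] by (cases "s \<in> ?F") auto
    qed
  qed
  show ?thesis unfolding has_faithful_cstar_rep_def
    apply (rule exI[of _ AA], rule exI[of _ pi])
    using cstar_AA hom inj by simp
qed


definition pinj :: "(nat \<Rightarrow> nat option) \<Rightarrow> bool" where
  "pinj \<psi> \<longleftrightarrow> (\<forall>k k' j. \<psi> k = Some j \<longrightarrow> \<psi> k' = Some j \<longrightarrow> k = k')"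

definition ipair :: "(nat \<Rightarrow> nat option) \<Rightarrow> (nat \<Rightarrow> nat option) \<Rightarrow> bool" where
  "ipair \<psi> \<rho> \<longleftrightarrow> (\<forall>k j. \<psi> k = Some j \<longleftrightarrow> \<rho> j = Some k)"

definition opv :: "(nat \<Rightarrow> nat option) \<Rightarrow> (nat \<Rightarrow> complex) \<Rightarrow> nat \<Rightarrow> complex" where
  "opv \<psi> x k = (case \<psi> k of None \<Rightarrow> 0 | Some j \<Rightarrow> x j)"

lemma ipair_pinj: "ipair \<psi> \<rho> \<Longrightarrow> pinj \<psi>"
  unfolding ipair_def pinj_def by (metis option.inject)

lemma opv_partial:
  assumes "pinj \<psi>"
  shows "(\<Sum>k<K. (norm (opv \<psi> (Rep_ell2 x) k))^2) \<le> (norm x)^2"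
proof -
  let ?D = "{k. k < K \<and> \<psi> k \<noteq> None}"
  let ?h = "\<lambda>k. the (\<psi> k)"
  have "(\<Sum>k<K. (norm (opv \<psi> (Rep_ell2 x) k))^2) = (\<Sum>k\<in>?D. (norm (opv \<psi> (Rep_ell2 x) k))^2)"
    by (rule sum.mono_neutral_right) (auto simp: opv_def)
  also have "\<dots> = (\<Sum>k\<in>?D. (norm (Rep_ell2 x (?h k)))^2)"
    by (rule sum.cong) (auto simp: opv_def)
  also have "\<dots> = (\<Sum>j\<in>?h ` ?D. (norm (Rep_ell2 x j))^2)"
  proof (rule sum.reindex[symmetric, unfolded o_def])
    show "inj_on ?h ?D" using assms unfolding pinj_def inj_on_def by fastforce
  qed
  also have "\<dots> \<le> (\<Sum>j. (norm (Rep_ell2 x j))^2)"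
    by (rule sum_le_suminf[OF ell2_summable]) auto
  also have "\<dots> = (norm x)^2" by (simp add: norm_ell2_sq)
  finally show ?thesis .
qed

lemma opv_summable:
  assumes "pinj \<psi>"
  shows "summable (\<lambda>k. (norm (opv \<psi> (Rep_ell2 x) k))^2)"
  by (rule summableI_nonneg_bounded[OF _ opv_partial[OF assms]]) simp

definition opf :: "(nat \<Rightarrow> nat option) \<Rightarrow> ell2 \<Rightarrow> ell2" where
  "opf \<psi> x = Abs_ell2 (opv \<psi> (Rep_ell2 x))"

lemma Rep_opf: "pinj \<psi> \<Longrightarrow> Rep_ell2 (opf \<psi> x) = opv \<psi> (Rep_ell2 x)"
  unfolding opf_def by (rule Abs_ell2_inverse) (simp add: opv_summable)

lemma norm_opf: assumes "pinj \<psi>" shows "norm (opf \<psi> x) \<le> norm x"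
proof -
  have "(norm (opf \<psi> x))^2 = (\<Sum>k. (norm (opv \<psi> (Rep_ell2 x) k))^2)"
    by (simp add: norm_ell2_sq Rep_opf[OF assms])
  also have "\<dots> \<le> (norm x)^2"
    by (rule suminf_le_const[OF opv_summable[OF assms] opv_partial[OF assms]])
  finally show ?thesis by (rule power2_le_imp_le) simp
qed

lemma bl_opf: assumes "pinj \<psi>" shows "bounded_linear (opf \<psi>)"
proof (rule bounded_linear_intro[where K=1])
  show "opf \<psi> (x + y) = opf \<psi> x + opf \<psi> y" for x y
    by (rule ell2_eqI) (simp add: Rep_opf[OF assms] opv_def split: option.split)
  show "opf \<psi> (r *\<^sub>R x) = r *\<^sub>R opf \<psi> x" for r x
    by (rule ell2_eqI) (simp add: Rep_opf[OF assms] opv_def split: option.split)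
  show "norm (opf \<psi> x) \<le> norm x * 1" for x using norm_opf[OF assms] by simp
qed

definition OP :: "(nat \<Rightarrow> nat option) \<Rightarrow> op" where "OP \<psi> = Blinfun (opf \<psi>)"

lemma OP_apply: "pinj \<psi> \<Longrightarrow> blinfun_apply (OP \<psi>) x = opf \<psi> x"
  by (simp add: OP_def bounded_linear_Blinfun_apply bl_opf)

lemma Rep_OP: "pinj \<psi> \<Longrightarrow> Rep_ell2 (OP \<psi> x) k = (case \<psi> k of None \<Rightarrow> 0 | Some j \<Rightarrow> Rep_ell2 x j)"
  by (simp add: OP_apply Rep_opf opv_def)

lemma clin_OP: "pinj \<psi> \<Longrightarrow> clin (OP \<psi>)"
  unfolding clin_def by (auto intro!: ell2_eqI simp: Rep_OP split: option.split)

lemma pinj_comp: "pinj \<psi> \<Longrightarrow> pinj \<rho> \<Longrightarrow> pinj (\<lambda>k. Option.bind (\<psi> k) \<rho>)"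
  unfolding pinj_def by (auto split: Option.bind_splits)

lemma OP_comp: "pinj \<psi> \<Longrightarrow> pinj \<rho> \<Longrightarrow> OP \<psi> o\<^sub>L OP \<rho> = OP (\<lambda>k. Option.bind (\<psi> k) \<rho>)"
  by (intro blinfun_eqI ell2_eqI) (simp add: Rep_OP pinj_comp split: option.split)

lemma abs_summable_inner:
  "summable (\<lambda>i. norm (inner (Rep_ell2 x i) (Rep_ell2 y i)))"
proof (rule summable_comparison_test'[where N=0])
  show "summable (\<lambda>i. (norm (Rep_ell2 x i))^2 + (norm (Rep_ell2 y i))^2)"
    using ell2_summable by (intro summable_add) auto
  fix n show "norm (norm (inner (Rep_ell2 x n) (Rep_ell2 y n))) \<le> (norm (Rep_ell2 x n))^2 + (norm (Rep_ell2 y n))^2"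
    using inner_le_sq by simp
qed

lemma inner_has_sum: "((\<lambda>i. inner (Rep_ell2 x i) (Rep_ell2 y i)) has_sum inner x y) UNIV"
  unfolding inner_ell2_def by (rule norm_summable_imp_has_sum[OF abs_summable_inner]) (rule summable_sums[OF summable_inner])

lemma is_adj_OP:
  assumes ip: "ipair \<psi> \<rho>"
  shows "is_adj (OP \<psi>) (OP \<rho>)"
  unfolding is_adj_def
proof (intro allI)
  fix x y
  have p1: "pinj \<psi>" using ip by (rule ipair_pinj)
  have p2: "pinj \<rho>" using ip unfolding ipair_def pinj_def by (metis option.inject)
  let ?g = "\<lambda>k. inner (Rep_ell2 (OP \<psi> x) k) (Rep_ell2 y k)"
  let ?h = "\<lambda>j. inner (Rep_ell2 x j) (Rep_ell2 (OP \<rho> y) j)"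
  let ?D1 = "{k. \<psi> k \<noteq> None}" and ?D2 = "{j. \<rho> j \<noteq> None}"
  have g: "(?g has_sum inner (OP \<psi> x) y) UNIV" by (rule inner_has_sum)
  have h: "(?h has_sum inner x (OP \<rho> y)) UNIV" by (rule inner_has_sum)
  have "(?h has_sum inner x (OP \<rho> y)) ?D2"
    using h by (subst has_sum_cong_neutral[where T=UNIV and g="?h"]) (auto simp: Rep_OP[OF p2])
  hence "(?g has_sum inner x (OP \<rho> y)) ?D1"
  proof (subst has_sum_reindex_bij_witness[where i="\<lambda>j. the (\<rho> j)" and j="\<lambda>k. the (\<psi> k)" and T="?D2" and h="?h" and s'="inner x (OP \<rho> y)"])
    have i1: "\<psi> a = Some j \<Longrightarrow> \<rho> j = Some a" for a j using ip unfolding ipair_def by blast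
    have i2: "\<rho> j = Some a \<Longrightarrow> \<psi> a = Some j" for a j using ip unfolding ipair_def by blast
    show "\<And>a. a \<in> ?D1 \<Longrightarrow> the (\<rho> (the (\<psi> a))) = a" using i1 by fastforce
    show "\<And>a. a \<in> ?D1 \<Longrightarrow> the (\<psi> a) \<in> ?D2" using i1 by fastforce
    show "\<And>b. b \<in> ?D2 \<Longrightarrow> the (\<psi> (the (\<rho> b))) = b" using i2 by fastforce
    show "\<And>b. b \<in> ?D2 \<Longrightarrow> the (\<rho> b) \<in> ?D1" using i2 by fastforce
    show "\<And>a. a \<in> ?D1 \<Longrightarrow> ?h (the (\<psi> a)) = ?g a"
    proof -
      fix a assume "a \<in> ?D1"
      then obtain j where j: "\<psi> a = Some j" by auto
      hence "\<rho> j = Some a" using ip unfolding ipair_def by blast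
      thus "?h (the (\<psi> a)) = ?g a" using j by (simp add: Rep_OP p1 p2 inner_commute)
    qed
  qed auto
  hence "(?g has_sum inner x (OP \<rho> y)) UNIV"
    by (subst has_sum_cong_neutral[where T=UNIV and g="?g", symmetric]) (auto simp: Rep_OP[OF p1])
  thus "inner (OP \<psi> x) y = inner x (OP \<rho> y)" using g has_sum_unique by blast
qed

lemma Car_OP: "ipair \<psi> \<rho> \<Longrightarrow> OP \<psi> \<in> Car"
  unfolding Car_def using clin_OP ipair_pinj is_adj_OP by blast

lemma adj_OP: "ipair \<psi> \<rho> \<Longrightarrow> adj (OP \<psi>) = OP \<rho>"
  by (rule adj_eq[OF is_adj_OP])

lemma ipair_sym: "ipair \<psi> \<rho> \<Longrightarrow> ipair \<rho> \<psi>"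
  unfolding ipair_def by blast


definition ebas :: "nat \<Rightarrow> ell2" where
  "ebas k = Abs_ell2 (\<lambda>i. if i = k then 1 else 0)"

lemma Rep_ebas: "Rep_ell2 (ebas k) = (\<lambda>i. if i = k then 1 else 0)"
  unfolding ebas_def by (rule Abs_ell2_inverse, simp, rule summable_finite[of "{k}"], auto)

lemma Rep_apply_sum: "Rep_ell2 (blinfun_apply (\<Sum>s\<in>F. (T s :: op)) x) i = (\<Sum>s\<in>F. Rep_ell2 (T s x) i)"
  by (simp add: blinfun.sum_left Rep_sum)

lemma Rep_apply_sc: "Rep_ell2 (sc c T x) i = c * Rep_ell2 (T x) i"
  by (simp add: sc_def)

definition phi :: "nat \<times> nat \<Rightarrow> nat \<Rightarrow> nat option" where
  "phi p k = (if fst p \<le> k then Some (k - fst p + snd p) else None)"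

lemma ipair_phi: "ipair (phi (m, n)) (phi (n, m))"
  unfolding ipair_def phi_def by auto

lemma pinj_phi: "pinj (phi p)"
  using ipair_pinj[OF ipair_phi[of "fst p" "snd p"]] by simp

definition VB :: "nat \<times> nat \<Rightarrow> op" where "VB p = OP (phi p)"

lemma VB_Car: "VB p \<in> Car"
  unfolding VB_def using Car_OP[OF ipair_phi[of "fst p" "snd p"]] by simp

lemma VB_mult: "VB (bc_mult s t) = VB s o\<^sub>L VB t"
proof -
  have "phi (bc_mult s t) = (\<lambda>k. Option.bind (phi s k) (phi t))"
  proof
    fix k
    obtain a b where s: "s = (a, b)" by force
    obtain c d where t: "t = (c, d)" by force
    show "phi (bc_mult s t) k = Option.bind (phi s k) (phi t)"
      unfolding s t phi_def bc_mult_def by auto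
  qed
  thus ?thesis unfolding VB_def by (simp add: OP_comp pinj_phi)
qed

lemma VB_star: "VB (bc_star s) = adj (VB s)"
proof -
  obtain a b where s: "s = (a, b)" by force
  show ?thesis unfolding s VB_def bc_star_def by (simp add: adj_OP[OF ipair_phi])
qed

lemma bc_star_inv: "bc_star (bc_star s) = s"
  by (cases s) (simp add: bc_star_def)

lemma VB_ind:
  assumes F: "finite F" and Z: "(\<Sum>s\<in>F. sc (c s) (VB s)) = 0"
  shows "\<forall>s\<in>F. c s = 0"
proof (rule ccontr)
  assume "\<not> (\<forall>s\<in>F. c s = 0)"
  define G where "G = {s\<in>F. c s \<noteq> 0}"
  have G: "finite G" "G \<noteq> {}" using F \<open>\<not> _\<close> unfolding G_def by auto
  define m0 where "m0 = Min (fst ` G)"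
  have "m0 \<in> fst ` G" unfolding m0_def using G by (intro Min_in) auto
  then obtain n0 where s0: "(m0, n0) \<in> G" by force
  have mge: "\<And>s. s \<in> G \<Longrightarrow> m0 \<le> fst s" unfolding m0_def using G by auto
  have val: "Rep_ell2 (VB s (ebas n0)) m0 = (if fst s \<le> m0 \<and> m0 - fst s + snd s = n0 then 1 else 0)" for s
    by (simp add: VB_def Rep_OP pinj_phi phi_def Rep_ebas)
  have "0 = Rep_ell2 ((\<Sum>s\<in>F. sc (c s) (VB s)) (ebas n0)) m0" using Z by simp
  also have "\<dots> = (\<Sum>s\<in>F. c s * (if fst s \<le> m0 \<and> m0 - fst s + snd s = n0 then 1 else 0))"
    by (simp add: Rep_apply_sum Rep_apply_sc val)
  also have "\<dots> = c (m0, n0)"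
  proof -
    have s0F: "(m0, n0) \<in> F" using s0 unfolding G_def by auto
    have "(\<Sum>s\<in>F. c s * (if fst s \<le> m0 \<and> m0 - fst s + snd s = n0 then 1 else 0))
        = (\<Sum>s\<in>{(m0, n0)}. c s * (if fst s \<le> m0 \<and> m0 - fst s + snd s = n0 then 1 else 0))"
    proof (rule sum.mono_neutral_right[OF F])
      show "{(m0, n0)} \<subseteq> F" using s0F by simp
      show "\<forall>s\<in>F - {(m0, n0)}. c s * (if fst s \<le> m0 \<and> m0 - fst s + snd s = n0 then 1 else 0) = 0"
      proof
        fix s assume s: "s \<in> F - {(m0, n0)}"
        show "c s * (if fst s \<le> m0 \<and> m0 - fst s + snd s = n0 then 1 else 0) = 0"
        proof (cases "c s = 0")
          case False
          hence "s \<in> G" using s unfolding G_def by auto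
          hence "m0 \<le> fst s" by (rule mge)
          moreover have "s \<noteq> (m0, n0)" using s by auto
          ultimately have nc: "\<not> (fst s \<le> m0 \<and> m0 - fst s + snd s = n0)" by (cases s) auto
          show ?thesis by (simp only: if_not_P[OF nc] mult_zero_right)
        qed simp
      qed
    qed
    thus ?thesis by simp
  qed
  finally have "c (m0, n0) = 0" by simp
  thus False using s0 unfolding G_def by auto
qed

lemma bc_faithful: "has_faithful_cstar_rep bc_mult bc_star"
  by (rule faithful_from_ops[OF VB_Car VB_mult VB_star bc_star_inv VB_ind])


type_synonym letter = "nat \<times> bool"
type_synonym word = "letter list"

definition bar :: "letter \<Rightarrow> letter" where "bar = (\<lambda>(n, b). (n, \<not> b))"

lemma bar_bar[simp]: "bar (bar a) = a" by (cases a) (simp add: bar_def)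

definition cre :: "letter \<Rightarrow> nat \<Rightarrow> nat option" where
  "cre a k = (case (from_nat k :: word) of [] \<Rightarrow> None
     | b # w \<Rightarrow> if b = a \<and> to_nat (from_nat k :: word) = k then Some (to_nat w) else None)"

definition ann :: "letter \<Rightarrow> nat \<Rightarrow> nat option" where
  "ann a j = (if to_nat (from_nat j :: word) = j then Some (to_nat (a # (from_nat j :: word))) else None)"

lemma ipair_cre: "ipair (cre a) (ann a)"
  unfolding ipair_def
proof (intro allI iffI)
  fix k j
  assume h: "cre a k = Some j"
  then obtain w where w: "(from_nat k :: word) = a # w" "to_nat (from_nat k :: word) = k" "j = to_nat w"
    unfolding cre_def by (auto split: list.splits if_splits)
  thus "ann a j = Some k" unfolding ann_def by auto
next
  fix k j
  assume h: "ann a j = Some k"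
  hence j: "to_nat (from_nat j :: word) = j" and k: "k = to_nat (a # (from_nat j :: word))"
    unfolding ann_def by (auto split: if_splits)
  show "cre a k = Some j" unfolding cre_def k using j by simp
qed

lemma pinj_cre: "pinj (cre a)" by (rule ipair_pinj[OF ipair_cre])
lemma pinj_ann: "pinj (ann a)" by (rule ipair_pinj[OF ipair_sym[OF ipair_cre]])

definition XX :: "letter \<Rightarrow> op" where "XX a = OP (cre a) + OP (ann (bar a))"

lemma XX_Car: "XX a \<in> Car"
  unfolding XX_def by (intro Car_add Car_OP[OF ipair_cre] Car_OP[OF ipair_sym[OF ipair_cre]])

lemma XX_adj: "adj (XX a) = XX (bar a)"
  unfolding XX_def
  by (simp add: adj_add Car_OP[OF ipair_cre] Car_OP[OF ipair_sym[OF ipair_cre]]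
      adj_OP[OF ipair_cre] adj_OP[OF ipair_sym[OF ipair_cre]] add.commute)

primrec WW :: "word \<Rightarrow> op" where
  "WW [] = id_blinfun"
| "WW (a # w) = XX a o\<^sub>L WW w"

lemma WW_Car: "WW w \<in> Car"
  by (induction w) (simp_all add: Car_id Car_comp XX_Car)

lemma WW_append: "WW (u @ v) = WW u o\<^sub>L WW v"
  by (induction u) (simp_all add: comp_assoc)

lemma sinf_star_bar: "sinf_star u = rev (map bar u)"
  unfolding sinf_star_def bar_def by simp

lemma WW_star: "WW (sinf_star u) = adj (WW u)"
proof (induction u)
  case Nil thus ?case by (simp add: sinf_star_def adj_id)
next
  case (Cons a u)
  have "WW (sinf_star (a # u)) = WW (sinf_star u) o\<^sub>L XX (bar a)"
    by (simp add: sinf_star_bar WW_append)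
  also have "\<dots> = adj (WW u) o\<^sub>L adj (XX a)" by (simp add: Cons XX_adj)
  also have "\<dots> = adj (WW (a # u))" by (simp add: adj_comp XX_Car WW_Car)
  finally show ?case .
qed

lemma sinf_star_inv: "sinf_star (sinf_star u) = u"
  by (simp add: sinf_star_bar rev_map comp_def)

lemma WW_mult: "WW (sinf_mult u v) = WW u o\<^sub>L WW v"
  by (simp add: sinf_mult_def WW_append)

definition Om :: ell2 where "Om = ebas (to_nat ([] :: word))"

lemma Rep_XX: "Rep_ell2 (XX a y) (to_nat (v :: word)) =
   (case v of [] \<Rightarrow> 0 | b # v' \<Rightarrow> if b = a then Rep_ell2 y (to_nat v') else 0)
   + Rep_ell2 y (to_nat (bar a # v))"
  by (simp add: XX_def blinfun.add_left Rep_OP pinj_cre pinj_ann cre_def ann_def split: list.split)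

lemma WW_Om: "length w \<le> length v \<Longrightarrow> Rep_ell2 (WW w Om) (to_nat v) = (if v = w then 1 else 0)"
proof (induction w arbitrary: v)
  case Nil thus ?case by (simp add: Om_def Rep_ebas)
next
  case (Cons a w)
  then obtain b v' where v: "v = b # v'" by (cases v) auto
  have l1: "length w \<le> length v'" using Cons.prems v by simp
  have l2: "length w \<le> length (bar a # v)" using Cons.prems by simp
  have "Rep_ell2 (WW (a # w) Om) (to_nat v)
      = (if b = a then Rep_ell2 (WW w Om) (to_nat v') else 0) + Rep_ell2 (WW w Om) (to_nat (bar a # v))"
    by (simp add: Rep_XX v)
  also have "\<dots> = (if b = a then (if v' = w then 1 else 0) else 0) + (if bar a # v = w then 1 else 0)"
    by (simp add: Cons.IH[OF l1] Cons.IH[OF l2])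
  also have "\<dots> = (if v = a # w then 1 else 0)"
    using Cons.prems by (auto simp: v)
  finally show ?case .
qed

lemma WW_ind:
  assumes F: "finite F" and Z: "(\<Sum>s\<in>F. sc (c s) (WW s)) = 0"
  shows "\<forall>s\<in>F. c s = 0"
proof (rule ccontr)
  assume "\<not> (\<forall>s\<in>F. c s = 0)"
  define G where "G = {s\<in>F. c s \<noteq> 0}"
  have G: "finite G" "G \<noteq> {}" using F \<open>\<not> _\<close> unfolding G_def by auto
  define M where "M = Max (length ` G)"
  have "M \<in> length ` G" unfolding M_def using G by (intro Max_in) auto
  then obtain w0 where w0: "w0 \<in> G" "length w0 = M" by force
  have mle: "\<And>s. s \<in> G \<Longrightarrow> length s \<le> M" unfolding M_def using G by auto
  have "0 = Rep_ell2 ((\<Sum>s\<in>F. sc (c s) (WW s)) Om) (to_nat w0)" using Z by simp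
  also have "\<dots> = (\<Sum>s\<in>F. c s * Rep_ell2 (WW s Om) (to_nat w0))"
    by (simp add: Rep_apply_sum Rep_apply_sc)
  also have "\<dots> = c w0"
  proof -
    have s0F: "w0 \<in> F" using w0 unfolding G_def by auto
    have "(\<Sum>s\<in>F. c s * Rep_ell2 (WW s Om) (to_nat w0)) = (\<Sum>s\<in>{w0}. c s * Rep_ell2 (WW s Om) (to_nat w0))"
    proof (rule sum.mono_neutral_right[OF F])
      show "{w0} \<subseteq> F" using s0F by simp
      show "\<forall>s\<in>F - {w0}. c s * Rep_ell2 (WW s Om) (to_nat w0) = 0"
      proof
        fix s assume s: "s \<in> F - {w0}"
        show "c s * Rep_ell2 (WW s Om) (to_nat w0) = 0"
        proof (cases "c s = 0")
          case False
          hence "s \<in> G" using s unfolding G_def by auto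
          hence "length s \<le> length w0" using mle w0 by simp
          hence "Rep_ell2 (WW s Om) (to_nat w0) = (if w0 = s then 1 else 0)" by (rule WW_Om)
          thus ?thesis using s by auto
        qed simp
      qed
    qed
    also have "\<dots> = c w0" using WW_Om[of w0 w0] by simp
    finally show ?thesis .
  qed
  finally have "c w0 = 0" by simp
  thus False using w0 unfolding G_def by auto
qed

lemma sinf_faithful: "has_faithful_cstar_rep sinf_mult sinf_star"
  by (rule faithful_from_ops[OF WW_Car WW_mult WW_star sinf_star_inv WW_ind])


theorem lemma2p1:
  shows "has_faithful_cstar_rep bc_mult bc_star \<and> has_faithful_cstar_rep sinf_mult sinf_star"
  using bc_faithful sinf_faithful by blast

end
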